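(* For $1\le k\le n$ let $\mathcal F(k)=\sum_{r\ge0}\frac{(-1)^r}{r!}h_k^{[r]}\otimes e_k^rt^r$ with $h_k=\mathcal D_K(x^{\epsilon_k+\epsilon_{-k}})$, $e_k=\mathcal D_K(x^{2\epsilon_k+\epsilon_{-k}})$. Then for $1\le k\ne k'\le n$, the product $\mathcal F(k)\mathcal F(k')$ is again a Drinfel'd twist on the Hopf algebra $U(\mathbf K^+)[[t]]$ (with its standard Hopf structure).
   Context: Let $\mathbb F$ be a field of characteristic $0$ and $n\ge1$. Coordinates are indexed by $\{-n,\dots,-1,0,1,\dots,n\}$; $\epsilon_i\in\mathbb Z^{2n+1}$ is the $i$-th unit vector and, for $\alpha\in\mathbb Z^{2n+1}$, $x^\alpha=\prod_i x_i^{\alpha_i}$ in $\mathbb F[x_{-n}^{\pm1},\dots,x_n^{\pm1}]$. Define the derivation $\mathcal D_K(x^\alpha)=\big(2-\sum_{i=1}^n(\alpha_i+\alpha_{-i})\big)x^\alpha\frac{\partial}{\partial x_0}+\sum_{i=1}^n\Big[(\alpha_0x^{\alpha+\epsilon_i-\epsilon_0}+\alpha_{-i}x^{\alpha-\epsilon_{-i}})\frac{\partial}{\partial x_i}+(\alpha_0x^{\alpha+\epsilon_{-i}-\epsilon_0}-\alpha_ix^{\alpha-\epsilon_i})\frac{\partial}{\partial x_{-i}}\Big]$, extended linearly. The generalized Cartan type $K$ Lie algebra $\mathbf K$ is the Lie algebra of derivations (commutator bracket) with basis $\{\mathcal D_K(x^\alpha):\alpha\in\mathbb Z^{2n+1}\}$;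 explicitly $[\mathcal D_K(x^\alpha),\mathcal D_K(x^\beta)]=\mathcal D_K\Big(\big((2-\sum_{i=1}^n(\alpha_i+\alpha_{-i}))\beta_0-(2-\sum_{i=1}^n(\beta_i+\beta_{-i}))\alpha_0\big)x^{\alpha+\beta-\epsilon_0}+\sum_{i=1}^n(\alpha_{-i}\beta_i-\alpha_i\beta_{-i})x^{\alpha+\beta-\epsilon_i-\epsilon_{-i}}\Big)$. $\mathbf K^+$ is the subalgebra spanned by $\mathcal D_K(x^\alpha)$, $\alpha\in\mathbb Z_{\ge0}^{2n+1}$. $x^{[m]}=x(x-1)\cdots(x-m+1)$ ($x^{[0]}=1$). $U(L)[[t]]$ carries the standard Hopf structure $\Delta_0(y)=y\otimes1+1\otimes y$, $S_0(y)=-y$, $\varepsilon(y)=0$ for $y\in L$. A Drinfel'd twist on a Hopf algebra $(A,\Delta_0,\varepsilon)$ is an invertible $\mathcal F\in A\otimes A$ with $(\mathcal F\otimes1)(\Delta_0\otimes\mathrm{Id})(\mathcal F)=(1\otimes\mathcal F)(\mathrm{Id}\otimes\Delta_0)(\mathcal F)$ and $(\varepsilon\otimes\mathrm{Id})(\mathcal F)=1=(\mathrm{Id}\otimes\varepsilon)(\mathcal F)$ (tensor products completed $t$-adically). *)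

theory Defs
  imports Main
begin

text \<open>Exponents alpha in Z^{2n+1} are functions int => int (coordinates -n..n, zero
outside). The basis element D_K(x^alpha) of K^+ is identified with alpha.\<close>

definition valid_exp :: "nat \<Rightarrow> (int \<Rightarrow> int) \<Rightarrow> bool" where
  "valid_exp n \<alpha> \<longleftrightarrow> (\<forall>i. 0 \<le> \<alpha> i) \<and> (\<forall>i. int n < \<bar>i\<bar> \<longrightarrow> \<alpha> i = 0)"

definition unitv :: "int \<Rightarrow> int \<Rightarrow> int" where
  "unitv i = (\<lambda>j. if j = i then 1 else 0)"

definition deg_sum :: "nat \<Rightarrow> (int \<Rightarrow> int) \<Rightarrow> int" where
  "deg_sum n \<alpha> = (\<Sum>i\<in>{1..int n}. \<alpha> i + \<alpha> (-i))"

text \<open>Coefficient of D_K(x^gamma) in [D_K(x^alpha), D_K(x^beta)].\<close>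
definition brk_coef :: "nat \<Rightarrow> (int \<Rightarrow> int) \<Rightarrow> (int \<Rightarrow> int) \<Rightarrow> (int \<Rightarrow> int) \<Rightarrow> int" where
  "brk_coef n \<alpha> \<beta> \<gamma> =
     (if \<gamma> = (\<lambda>j. \<alpha> j + \<beta> j - unitv 0 j)
      then (2 - deg_sum n \<alpha>) * \<beta> 0 - (2 - deg_sum n \<beta>) * \<alpha> 0 else 0)
   + (\<Sum>i\<in>{1..int n}. if \<gamma> = (\<lambda>j. \<alpha> j + \<beta> j - unitv i j - unitv (-i) j)
                      then \<alpha> (-i) * \<beta> i - \<alpha> i * \<beta> (-i) else 0)"

text \<open>A generator (j, alpha) stands for D_K(x^alpha) placed in the j-th tensor factor.
Elements of the free algebra are coefficient functions on words.\<close>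

type_synonym gen = "nat \<times> (int \<Rightarrow> int)"

definition fa_zero :: "gen list \<Rightarrow> 'a::field" where
  "fa_zero = (\<lambda>w. 0)"

definition fa_one :: "gen list \<Rightarrow> 'a::field" where
  "fa_one = (\<lambda>w. if w = [] then 1 else 0)"

definition fa_gen :: "gen \<Rightarrow> gen list \<Rightarrow> 'a::field" where
  "fa_gen g = (\<lambda>w. if w = [g] then 1 else 0)"

definition fa_word :: "gen list \<Rightarrow> gen list \<Rightarrow> 'a::field" where
  "fa_word u = (\<lambda>w. if w = u then 1 else 0)"

definition fa_add :: "(gen list \<Rightarrow> 'a::field) \<Rightarrow> (gen list \<Rightarrow> 'a) \<Rightarrow> gen list \<Rightarrow> 'a" where
  "fa_add x y = (\<lambda>w. x w + y w)"

definition fa_sub :: "(gen list \<Rightarrow> 'a::field) \<Rightarrow> (gen list \<Rightarrow> 'a) \<Rightarrow> gen list \<Rightarrow> 'a" where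
  "fa_sub x y = (\<lambda>w. x w - y w)"

definition fa_smult :: "'a::field \<Rightarrow> (gen list \<Rightarrow> 'a) \<Rightarrow> gen list \<Rightarrow> 'a" where
  "fa_smult c x = (\<lambda>w. c * x w)"

definition fa_mult :: "(gen list \<Rightarrow> 'a::field) \<Rightarrow> (gen list \<Rightarrow> 'a) \<Rightarrow> gen list \<Rightarrow> 'a" where
  "fa_mult x y = (\<lambda>w. \<Sum>i\<le>length w. x (take i w) * y (drop i w))"

definition fa_elem :: "nat \<Rightarrow> nat \<Rightarrow> (gen list \<Rightarrow> 'a::field) \<Rightarrow> bool" where
  "fa_elem n m x \<longleftrightarrow> finite {w. x w \<noteq> 0} \<and>
     (\<forall>w. x w \<noteq> 0 \<longrightarrow> (\<forall>g\<in>set w. fst g < m \<and> valid_exp n (snd g)))"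

section \<open>U(K^+)^{\<otimes>m} = free algebra modulo the two-sided ideal of relations\<close>

definition bracket_elem :: "nat \<Rightarrow> nat \<Rightarrow> (int \<Rightarrow> int) \<Rightarrow> (int \<Rightarrow> int) \<Rightarrow> gen list \<Rightarrow> 'a::field" where
  "bracket_elem n j \<alpha> \<beta> =
     (\<lambda>w. if (\<exists>\<gamma>. w = [(j, \<gamma>)]) then of_int (brk_coef n \<alpha> \<beta> (snd (hd w))) else 0)"

text \<open>Relations: x y - y x - [x,y] inside one tensor factor; factors in different
tensor slots commute.\<close>
definition rels :: "nat \<Rightarrow> nat \<Rightarrow> (gen list \<Rightarrow> 'a::field) set" where
  "rels n m =
     {fa_sub (fa_sub (fa_mult (fa_gen (j, \<alpha>)) (fa_gen (j, \<beta>))) (fa_mult (fa_gen (j, \<beta>)) (fa_gen (j, \<alpha>))))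
             (bracket_elem n j \<alpha> \<beta>) | j \<alpha> \<beta>. j < m \<and> valid_exp n \<alpha> \<and> valid_exp n \<beta>}
   \<union> {fa_sub (fa_mult (fa_gen (j, \<alpha>)) (fa_gen (l, \<beta>))) (fa_mult (fa_gen (l, \<beta>)) (fa_gen (j, \<alpha>)))
       | j l \<alpha> \<beta>. j < m \<and> l < m \<and> j \<noteq> l \<and> valid_exp n \<alpha> \<and> valid_exp n \<beta>}"

inductive_set ideal :: "nat \<Rightarrow> nat \<Rightarrow> (gen list \<Rightarrow> 'a::field) set" for n m where
  rel: "r \<in> rels n m \<Longrightarrow> r \<in> ideal n m"
| zero: "fa_zero \<in> ideal n m"
| add: "x \<in> ideal n m \<Longrightarrow> y \<in> ideal n m \<Longrightarrow> fa_add x y \<in> ideal n m"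
| smult: "x \<in> ideal n m \<Longrightarrow> fa_smult c x \<in> ideal n m"
| mult: "x \<in> ideal n m \<Longrightarrow> fa_mult (fa_word u) (fa_mult x (fa_word v)) \<in> ideal n m"

definition fa_eq :: "nat \<Rightarrow> nat \<Rightarrow> (gen list \<Rightarrow> 'a::field) \<Rightarrow> (gen list \<Rightarrow> 'a) \<Rightarrow> bool" where
  "fa_eq n m x y \<longleftrightarrow> fa_sub x y \<in> ideal n m"

primrec wprod :: "(gen \<Rightarrow> gen list \<Rightarrow> 'a::field) \<Rightarrow> gen list \<Rightarrow> gen list \<Rightarrow> 'a" where
  "wprod \<phi> [] = fa_one"
| "wprod \<phi> (g # w) = fa_mult (\<phi> g) (wprod \<phi> w)"

definition fa_hom :: "(gen \<Rightarrow> gen list \<Rightarrow> 'a::field) \<Rightarrow> (gen list \<Rightarrow> 'a) \<Rightarrow> gen list \<Rightarrow> 'a" where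
  "fa_hom \<phi> x = (\<lambda>v. \<Sum>w\<in>{w. x w \<noteq> 0}. x w * wprod \<phi> w v)"

primrec fa_pow :: "(gen list \<Rightarrow> 'a::field) \<Rightarrow> nat \<Rightarrow> gen list \<Rightarrow> 'a" where
  "fa_pow x 0 = fa_one"
| "fa_pow x (Suc r) = fa_mult x (fa_pow x r)"

text \<open>Falling factorial x^{[r]} = x(x-1)...(x-r+1).\<close>
primrec fa_falling :: "(gen list \<Rightarrow> 'a::field) \<Rightarrow> nat \<Rightarrow> gen list \<Rightarrow> 'a" where
  "fa_falling x 0 = fa_one"
| "fa_falling x (Suc r) = fa_mult (fa_falling x r) (fa_sub x (fa_smult (of_nat r) fa_one))"

section \<open>Formal power series in t (t-adically completed tensor products)\<close>

definition ser_one :: "nat \<Rightarrow> gen list \<Rightarrow> 'a::field" where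
  "ser_one = (\<lambda>r. if r = 0 then fa_one else fa_zero)"

definition ser_mult :: "(nat \<Rightarrow> gen list \<Rightarrow> 'a::field) \<Rightarrow> (nat \<Rightarrow> gen list \<Rightarrow> 'a) \<Rightarrow> nat \<Rightarrow> gen list \<Rightarrow> 'a" where
  "ser_mult F G = (\<lambda>r w. \<Sum>i\<le>r. fa_mult (F i) (G (r - i)) w)"

definition ser_map :: "(gen \<Rightarrow> gen list \<Rightarrow> 'a::field) \<Rightarrow> (nat \<Rightarrow> gen list \<Rightarrow> 'a) \<Rightarrow> nat \<Rightarrow> gen list \<Rightarrow> 'a" where
  "ser_map \<phi> F = (\<lambda>r. fa_hom \<phi> (F r))"

definition ser_eq :: "nat \<Rightarrow> nat \<Rightarrow> (nat \<Rightarrow> gen list \<Rightarrow> 'a::field) \<Rightarrow> (nat \<Rightarrow> gen list \<Rightarrow> 'a) \<Rightarrow> bool" where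
  "ser_eq n m F G \<longleftrightarrow> (\<forall>r. fa_eq n m (F r) (G r))"

text \<open>Delta_0 (x) Id : U^{\<otimes>2} \<rightarrow> U^{\<otimes>3}\<close>
definition delta_left :: "gen \<Rightarrow> gen list \<Rightarrow> 'a::field" where
  "delta_left g = (if fst g = 0 then fa_add (fa_gen (0, snd g)) (fa_gen (1, snd g))
                   else fa_gen (fst g + 1, snd g))"

text \<open>Id (x) Delta_0 : U^{\<otimes>2} \<rightarrow> U^{\<otimes>3}\<close>
definition delta_right :: "gen \<Rightarrow> gen list \<Rightarrow> 'a::field" where
  "delta_right g = (if fst g = 0 then fa_gen g
                    else fa_add (fa_gen (fst g, snd g)) (fa_gen (fst g + 1, snd g)))"

text \<open>X \<mapsto> 1 (x) X\<close>
definition shift_slot :: "gen \<Rightarrow> gen list \<Rightarrow> 'a::field" where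
  "shift_slot g = fa_gen (fst g + 1, snd g)"

text \<open>epsilon (x) Id and Id (x) epsilon : U^{\<otimes>2} \<rightarrow> U\<close>
definition eps_left :: "gen \<Rightarrow> gen list \<Rightarrow> 'a::field" where
  "eps_left g = (if fst g = 0 then fa_zero else fa_gen (fst g - 1, snd g))"

definition eps_right :: "gen \<Rightarrow> gen list \<Rightarrow> 'a::field" where
  "eps_right g = (if fst g = 0 then fa_gen g else fa_zero)"

text \<open>F in (U(K^+) (x) U(K^+))[[t]]; F (x) 1 is F itself viewed in U^{\<otimes>3}.\<close>
definition is_twist :: "nat \<Rightarrow> (nat \<Rightarrow> gen list \<Rightarrow> 'a::field) \<Rightarrow> bool" where
  "is_twist n F \<longleftrightarrow>
     (\<forall>r. fa_elem n 2 (F r)) \<and>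
     (\<exists>G. (\<forall>r. fa_elem n 2 (G r)) \<and> ser_eq n 2 (ser_mult F G) ser_one \<and> ser_eq n 2 (ser_mult G F) ser_one) \<and>
     ser_eq n 3 (ser_mult F (ser_map delta_left F)) (ser_mult (ser_map shift_slot F) (ser_map delta_right F)) \<and>
     ser_eq n 1 (ser_map eps_left F) ser_one \<and>
     ser_eq n 1 (ser_map eps_right F) ser_one"

definition h_exp :: "int \<Rightarrow> int \<Rightarrow> int" where
  "h_exp k = (\<lambda>i. if i = k \<or> i = -k then 1 else 0)"

definition e_exp :: "int \<Rightarrow> int \<Rightarrow> int" where
  "e_exp k = (\<lambda>i. if i = k then 2 else if i = -k then 1 else 0)"

definition twistF :: "int \<Rightarrow> nat \<Rightarrow> gen list \<Rightarrow> 'a::field_char_0" where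
  "twistF k = (\<lambda>r. fa_smult ((-1) ^ r / fact r)
      (fa_mult (fa_falling (fa_gen (0, h_exp k)) r) (fa_pow (fa_gen (1, e_exp k)) r)))"

end

theory Submission
  imports Defs "HOL-Computational_Algebra.Formal_Power_Series"
begin

unbundle fps_syntax


lemma fa_mult_Nil: "fa_mult x y [] = x [] * y []"
  by (simp add: fa_mult_def)

lemma fa_mult_Cons: "fa_mult x y (a#w) = x [] * y (a#w) + fa_mult (\<lambda>u. x (a#u)) y w"
  unfolding fa_mult_def length_Cons by (subst sum.atMost_Suc_shift) simp

lemma fa_mult_addL: "fa_mult (\<lambda>u. f u + g u) z w = fa_mult f z w + fa_mult g z w"
  unfolding fa_mult_def by (simp add: distrib_right sum.distrib)

lemma fa_mult_addR: "fa_mult z (\<lambda>u. f u + g u) w = fa_mult z f w + fa_mult z g w"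
  unfolding fa_mult_def by (simp add: distrib_left sum.distrib)

lemma fa_mult_smultL: "fa_mult (\<lambda>u. c * f u) z w = c * fa_mult f z w"
  unfolding fa_mult_def by (simp add: sum_distrib_left mult.assoc)

lemma fa_mult_smultR: "fa_mult z (\<lambda>u. c * f u) w = c * fa_mult z f w"
  unfolding fa_mult_def by (simp add: sum_distrib_left algebra_simps)

lemma fa_mult_assoc_pt: "fa_mult (fa_mult x y) z w = fa_mult x (fa_mult y z) w"
proof (induction w arbitrary: x)
  case Nil then show ?case by (simp add: fa_mult_Nil)
next
  case (Cons a w)
  have e: "(\<lambda>u. fa_mult x y (a#u)) = (\<lambda>u. x [] * y (a#u) + fa_mult (\<lambda>v. x (a#v)) y u)"
    by (simp add: fa_mult_Cons)
  have "fa_mult (fa_mult x y) z (a#w) = x [] * y [] * z (a#w) + (x [] * fa_mult (\<lambda>u. y (a#u)) z w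
        + fa_mult (fa_mult (\<lambda>v. x (a#v)) y) z w)"
    by (simp add: fa_mult_Cons e fa_mult_addL fa_mult_smultL fa_mult_Nil)
  also have "\<dots> = fa_mult x (fa_mult y z) (a#w)"
    using Cons.IH[of "\<lambda>v. x (a#v)"] by (simp add: fa_mult_Cons fa_mult_Nil algebra_simps)
  finally show ?case .
qed

lemma fa_one_Cons: "(\<lambda>u. fa_one (a#u)) = (\<lambda>_. 0)"
  by (simp add: fa_one_def)

lemma fa_mult_oneL: "fa_mult fa_one y w = y w"
  by (cases w) (simp_all add: fa_mult_Cons fa_mult_Nil fa_one_Cons, simp_all add: fa_mult_def fa_one_def)

lemma fin_add: "finite {w. f w \<noteq> 0} \<Longrightarrow> finite {w. g w \<noteq> 0} \<Longrightarrow> finite {w. f w + g w \<noteq> (0::'a::field)}"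
  by (rule finite_subset[of _ "{w. f w \<noteq> 0} \<union> {w. g w \<noteq> 0}"]) auto
lemma fin_sub: "finite {w. f w \<noteq> 0} \<Longrightarrow> finite {w. g w \<noteq> 0} \<Longrightarrow> finite {w. f w - g w \<noteq> (0::'a::field)}"
  by (rule finite_subset[of _ "{w. f w \<noteq> 0} \<union> {w. g w \<noteq> 0}"]) auto

lemma fa_mult_oneR: "fa_mult y fa_one w = y w"
proof (induction w arbitrary: y)
  case Nil then show ?case by (simp add: fa_mult_Nil fa_one_def)
next
  case (Cons a w) then show ?case by (simp add: fa_mult_Cons fa_one_def)
qed

lemma fa_mult_zeroL: "fa_mult (\<lambda>_. 0) y w = 0"
  by (simp add: fa_mult_def)
lemma fa_mult_zeroR: "fa_mult y (\<lambda>_. 0) w = 0"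
  by (simp add: fa_mult_def)

definition supp :: "(gen list \<Rightarrow> 'a::zero) \<Rightarrow> gen list set" where
  "supp x = {w. x w \<noteq> 0}"

lemma supp_mult: "supp (fa_mult x y) \<subseteq> (\<lambda>(u,v). u @ v) ` (supp x \<times> supp y)"
proof
  fix w assume "w \<in> supp (fa_mult x y)"
  then obtain i where "x (take i w) * y (drop i w) \<noteq> 0"
    unfolding supp_def fa_mult_def by (auto elim: sum.not_neutral_contains_not_neutral)
  then show "w \<in> (\<lambda>(u,v). u @ v) ` (supp x \<times> supp y)"
    unfolding supp_def by (auto intro!: image_eqI[of _ _ "(take i w, drop i w)"])
qed

lemma finite_supp_mult: "finite (supp x) \<Longrightarrow> finite (supp y) \<Longrightarrow> finite (supp (fa_mult x y))"
  by (rule finite_subset[OF supp_mult]) auto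

typedef (overloaded) ('a::zero) fa = "{f :: gen list \<Rightarrow> 'a. finite {w. f w \<noteq> 0}}"
  morphisms rep Abs_fa by (rule exI[of _ "\<lambda>_. 0"]) simp

setup_lifting type_definition_fa

instantiation fa :: (field) ring_1
begin
lift_definition zero_fa :: "'a fa" is "\<lambda>_. 0" by simp
lift_definition one_fa :: "'a fa" is "fa_one" by (simp add: fa_one_def)
lift_definition plus_fa :: "'a fa \<Rightarrow> 'a fa \<Rightarrow> 'a fa" is "\<lambda>x y w. x w + y w"
  by (rule fin_add)
lift_definition uminus_fa :: "'a fa \<Rightarrow> 'a fa" is "\<lambda>x w. - x w" by simp
lift_definition minus_fa :: "'a fa \<Rightarrow> 'a fa \<Rightarrow> 'a fa" is "\<lambda>x y w. x w - y w"
  by (rule fin_sub)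
lift_definition times_fa :: "'a fa \<Rightarrow> 'a fa \<Rightarrow> 'a fa" is "fa_mult"
  using finite_supp_mult unfolding supp_def by blast
instance
proof
  fix a b c :: "'a fa"
  show "a * b * c = a * (b * c)" by transfer (simp add: fun_eq_iff fa_mult_assoc_pt)
  show "a + b + c = a + (b + c)" by transfer (simp add: add.assoc)
  show "a + b = b + a" by transfer (simp add: add.commute)
  show "0 + a = a" by transfer simp
  show "- a + a = 0" by transfer simp
  show "a - b = a + - b" by transfer simp
  show "(a + b) * c = a * c + b * c" by transfer (simp add: fun_eq_iff fa_mult_addL)
  show "a * (b + c) = a * b + a * c" by transfer (simp add: fun_eq_iff fa_mult_addR)
  show "1 * a = a" by transfer (simp add: fun_eq_iff fa_mult_oneL)
  show "a * 1 = a" by transfer (simp add: fun_eq_iff fa_mult_oneR)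
  show "(0::'a fa) \<noteq> 1" by transfer (auto simp: fa_one_def fun_eq_iff)
qed
end




primrec fall :: "'r::ring_1 \<Rightarrow> nat \<Rightarrow> 'r" where
  "fall X 0 = 1"
| "fall X (Suc r) = fall X r * (X - of_nat r)"

lemma sum_tri_aux:
  fixes g :: "nat \<Rightarrow> 'b::comm_monoid_add"
  assumes "i \<le> r"
  shows "(\<Sum>j\<le>r. if i + j \<le> r then g j else 0) = (\<Sum>j\<le>r-i. g j)"
proof -
  have "{j \<in> {..r}. i + j \<le> r} = {..r-i}" using assms by auto
  then show ?thesis using sum.inter_filter[of "{..r}" g "\<lambda>j. i + j \<le> r"] by simp
qed

lemma sum_swap_tri:
  fixes g :: "nat \<Rightarrow> nat \<Rightarrow> 'b::comm_monoid_add"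
  shows "(\<Sum>i\<le>r. \<Sum>j\<le>r-i. g i j) = (\<Sum>j\<le>r. \<Sum>i\<le>r-j. g i j)"
proof -
  have "(\<Sum>i\<le>r. \<Sum>j\<le>r-i. g i j) = (\<Sum>i\<le>r. \<Sum>j\<le>r. if i + j \<le> r then g i j else 0)"
    by (rule sum.cong[OF refl], rule sum_tri_aux[symmetric]) simp
  also have "\<dots> = (\<Sum>j\<le>r. \<Sum>i\<le>r. if i + j \<le> r then g i j else 0)"
    by (rule sum.swap)
  also have "\<dots> = (\<Sum>j\<le>r. \<Sum>i\<le>r. if j + i \<le> r then g i j else 0)"
    by (simp only: add.commute)
  also have "\<dots> = (\<Sum>j\<le>r. \<Sum>i\<le>r-j. g i j)"
    by (rule sum.cong[OF refl], rule sum_tri_aux) simp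
  finally show ?thesis .
qed

locale qring =
  fixes I :: "'r::ring_1 set"
  assumes I0: "0 \<in> I" and Iadd: "x \<in> I \<Longrightarrow> y \<in> I \<Longrightarrow> x + y \<in> I"
    and IL: "x \<in> I \<Longrightarrow> y * x \<in> I" and IR: "x \<in> I \<Longrightarrow> x * y \<in> I"
begin

lemma Iuminus: "x \<in> I \<Longrightarrow> - x \<in> I"
proof -
  assume "x \<in> I"
  then have "(-1) * x \<in> I" by (rule IL)
  then show ?thesis by simp
qed

lemma Idiff: "x \<in> I \<Longrightarrow> y \<in> I \<Longrightarrow> x - y \<in> I"
proof -
  assume a: "x \<in> I" "y \<in> I"
  have "x + - y \<in> I" by (rule Iadd[OF a(1) Iuminus[OF a(2)]])
  then show ?thesis by simp
qed

lemma Isum: "(\<And>a. a \<in> A \<Longrightarrow> f a \<in> I) \<Longrightarrow> sum f A \<in> I"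
proof (induction A rule: infinite_finite_induct)
  case (infinite A) then show ?case by (simp add: I0)
next
  case empty then show ?case by (simp add: I0)
next
  case (insert x F) then show ?case by (simp add: Iadd)
qed

definition eqv :: "'r \<Rightarrow> 'r \<Rightarrow> bool" (infix "\<approx>" 50) where
  "x \<approx> y \<longleftrightarrow> x - y \<in> I"

lemma eqv_refl[simp]: "x \<approx> x" by (simp add: eqv_def I0)
lemma eqv_eq: "x = y \<Longrightarrow> x \<approx> y" by simp
lemma eqv_sym: "x \<approx> y \<Longrightarrow> y \<approx> x"
  unfolding eqv_def using Iuminus[of "x - y"] by simp
lemma eqv_trans[trans]: "x \<approx> y \<Longrightarrow> y \<approx> z \<Longrightarrow> x \<approx> z"
  unfolding eqv_def using Iadd[of "x - y" "y - z"] by simp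
lemma eqv_add: "a \<approx> b \<Longrightarrow> c \<approx> d \<Longrightarrow> a + c \<approx> b + d"
  unfolding eqv_def using Iadd[of "a - b" "c - d"] by (simp add: algebra_simps)
lemma eqv_diff: "a \<approx> b \<Longrightarrow> c \<approx> d \<Longrightarrow> a - c \<approx> b - d"
  unfolding eqv_def using Idiff[of "a - b" "c - d"] by (simp add: algebra_simps)
lemma eqv_uminus: "a \<approx> b \<Longrightarrow> - a \<approx> - b"
  unfolding eqv_def using Iuminus[of "a - b"] by (simp add: algebra_simps)
lemma eqv_multL: "a \<approx> b \<Longrightarrow> c * a \<approx> c * b"
  unfolding eqv_def using IL[of "a - b" c] by (simp add: algebra_simps)
lemma eqv_multR: "a \<approx> b \<Longrightarrow> a * c \<approx> b * c"
  unfolding eqv_def using IR[of "a - b" c] by (simp add: algebra_simps)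
lemma eqv_mult: "a \<approx> b \<Longrightarrow> c \<approx> d \<Longrightarrow> a * c \<approx> b * d"
  by (meson eqv_multL eqv_multR eqv_trans)
lemma eqv_sum: "(\<And>i. i \<in> A \<Longrightarrow> f i \<approx> g i) \<Longrightarrow> sum f A \<approx> sum g A"
proof (induction A rule: infinite_finite_induct)
  case (insert x F) then show ?case by (simp add: eqv_add)
qed simp_all

definition cm :: "'r \<Rightarrow> 'r \<Rightarrow> bool" where
  "cm a b \<longleftrightarrow> a * b \<approx> b * a"

lemma cm_sym: "cm a b \<Longrightarrow> cm b a"
  unfolding cm_def by (rule eqv_sym)

inductive_set alg :: "'r set \<Rightarrow> 'r set" for S where
  a_gen: "s \<in> S \<Longrightarrow> s \<in> alg S"
| a_one: "1 \<in> alg S"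
| a_add: "x \<in> alg S \<Longrightarrow> y \<in> alg S \<Longrightarrow> x + y \<in> alg S"
| a_mult: "x \<in> alg S \<Longrightarrow> y \<in> alg S \<Longrightarrow> x * y \<in> alg S"
| a_cent: "(\<And>x. z * x = x * z) \<Longrightarrow> z \<in> alg S"

lemma alg_cm1:
  assumes "\<And>t. t \<in> T \<Longrightarrow> cm s t" and "y \<in> alg T"
  shows "cm s y"
  using assms(2)
proof induction
  case (a_gen t) then show ?case using assms(1) by simp
next
  case a_one then show ?case by (simp add: cm_def)
next
  case (a_add x y) then show ?case
    unfolding cm_def by (simp add: distrib_left distrib_right eqv_add)
next
  case (a_mult x y)
  have "s * (x * y) = (s * x) * y" by (simp add: mult.assoc)
  also have "\<dots> \<approx> (x * s) * y" using a_mult unfolding cm_def by (intro eqv_multR)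
  also have "\<dots> = x * (s * y)" by (simp add: mult.assoc)
  also have "\<dots> \<approx> x * (y * s)" using a_mult unfolding cm_def by (intro eqv_multL)
  finally show ?case unfolding cm_def by (simp add: mult.assoc)
next
  case (a_cent z) then show ?case by (simp add: cm_def)
qed

lemma alg_cm:
  assumes "\<And>s t. s \<in> S \<Longrightarrow> t \<in> T \<Longrightarrow> cm s t" and "x \<in> alg S" and "y \<in> alg T"
  shows "cm x y"
proof -
  have "cm y x" using assms(2)
  proof induction
    case (a_gen s) then show ?case using alg_cm1[of T s y] assms(1,3) by (blast intro: cm_sym)
  next
    case a_one then show ?case by (simp add: cm_def)
  next
    case (a_add x y') then show ?case
      unfolding cm_def by (simp add: distrib_left distrib_right eqv_add)
  next
    case (a_mult x1 x2)
    have "y * (x1 * x2) = (y * x1) * x2" by (simp add: mult.assoc)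
    also have "\<dots> \<approx> (x1 * y) * x2" using a_mult unfolding cm_def by (intro eqv_multR)
    also have "\<dots> = x1 * (y * x2)" by (simp add: mult.assoc)
    also have "\<dots> \<approx> x1 * (x2 * y)" using a_mult unfolding cm_def by (intro eqv_multL)
    finally show ?case unfolding cm_def by (simp add: mult.assoc)
  next
    case (a_cent z) then show ?case by (simp add: cm_def)
  qed
  then show ?thesis by (rule cm_sym)
qed

lemma alg_mono: "x \<in> alg S \<Longrightarrow> S \<subseteq> T \<Longrightarrow> x \<in> alg T"
  by (induction rule: alg.induct) (auto intro: alg.intros)

lemma alg_of_nat: "of_nat n \<in> alg S"
  by (rule a_cent) (simp add: mult_of_nat_commute)

lemma alg_diff: "x \<in> alg S \<Longrightarrow> y \<in> alg S \<Longrightarrow> x - y \<in> alg S"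
proof -
  assume "x \<in> alg S" "y \<in> alg S"
  moreover have "(-1::'r) \<in> alg S" by (rule a_cent) simp
  ultimately have "x + (-1) * y \<in> alg S" by (intro a_add a_mult)
  then show ?thesis by simp
qed

lemma alg_pow: "x \<in> alg S \<Longrightarrow> x ^ n \<in> alg S"
  by (induction n) (auto intro: alg.intros)

lemma alg_fall: "x \<in> alg S \<Longrightarrow> fall x n \<in> alg S"
  by (induction n) (auto intro: alg.intros alg_diff alg_of_nat)

lemma alg_sum: "(\<And>i. i \<in> A \<Longrightarrow> f i \<in> alg S) \<Longrightarrow> sum f A \<in> alg S"
  by (induction A rule: infinite_finite_induct) (auto intro: alg.intros a_cent)

end




lemma fall_split: "fall (X::'r::ring_1) (a + d) = fall X a * fall (X - of_nat a) d"
proof (induction d)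
  case 0 then show ?case by simp
next
  case (Suc d)
  have "fall X (a + Suc d) = fall X (a + d) * (X - of_nat (a + d))" by simp
  also have "\<dots> = fall X a * (fall (X - of_nat a) d * (X - of_nat a - of_nat d))"
    by (simp add: Suc mult.assoc algebra_simps)
  finally show ?case by simp
qed

locale qalg = qring I for I :: "'r::ring_1 set" +
  fixes sc :: "'k::field_char_0 \<Rightarrow> 'r"
  assumes sc_add: "sc (a + b) = sc a + sc b" and sc_mult: "sc (a * b) = sc a * sc b"
    and sc_one: "sc 1 = 1" and sc_comm: "sc c * x = x * sc c"
begin

lemma sc_zero[simp]: "sc 0 = 0"
  using sc_add[of 0 0] by simp

lemma sc_of_nat: "sc (of_nat n) = of_nat n"
  by (induction n) (simp_all add: sc_add sc_one)

lemma alg_sc: "sc c \<in> alg S"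
  by (rule a_cent) (simp add: sc_comm)

lemma sc_inv_cancel: "sc (1 / of_nat (Suc r)) * of_nat (Suc r) = 1"
proof -
  have c: "(1::'k) / of_nat (Suc r) * of_nat (Suc r) = 1"
    using of_nat_neq_0[of r, where 'a='k] by (simp only: divide_self_if times_divide_eq_left mult_1_left) simp
  have "sc (1 / of_nat (Suc r)) * of_nat (Suc r) = sc (1 / of_nat (Suc r) * of_nat (Suc r))"
    by (simp only: sc_mult sc_of_nat)
  also have "\<dots> = 1" by (simp only: c sc_one)
  finally show ?thesis .
qed

lemma eqv_cancel_nat:
  assumes "of_nat (Suc r) * a \<approx> of_nat (Suc r) * b"
  shows "a \<approx> b"
proof -
  have "sc (1 / of_nat (Suc r)) * (of_nat (Suc r) * a) \<approx> sc (1 / of_nat (Suc r)) * (of_nat (Suc r) * b)"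
    by (rule eqv_multL[OF assms])
  then show ?thesis by (simp only: mult.assoc[symmetric] sc_inv_cancel mult_1_left)
qed

lemma vdm:
  fixes u v w :: "nat \<Rightarrow> 'r" and c :: nat
  assumes cmST: "\<And>s t. s \<in> S \<Longrightarrow> t \<in> T \<Longrightarrow> cm s t"
    and X: "X \<in> alg S" and Y: "Y \<in> alg T"
    and uA: "\<And>i. u i \<in> alg S" and vA: "\<And>i. v i \<in> alg T"
    and u0: "u 0 = 1" and v0: "v 0 = 1" and w0: "w 0 = 1"
    and ur: "\<And>i. u i * (X - of_nat (i * c)) = of_nat (Suc i) * u (Suc i)"
    and vr: "\<And>i. v i * (Y - of_nat (i * c)) = of_nat (Suc i) * v (Suc i)"
    and wr: "\<And>i. w i * (X + Y - of_nat (i * c)) = of_nat (Suc i) * w (Suc i)"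
  shows "w r \<approx> (\<Sum>i\<le>r. u i * v (r - i))"
proof (induction r)
  case 0 then show ?case by (simp add: u0 v0 w0)
next
  case (Suc r)
  have step: "u i * v (r - i) * (X + Y - of_nat (r * c)) \<approx>
      of_nat (Suc i) * (u (Suc i) * v (r - i)) + of_nat (Suc (r - i)) * (u i * v (Suc (r - i)))"
    if "i \<le> r" for i
  proof -
    have sp: "X + Y - of_nat (r * c) = (X - of_nat (i * c)) + (Y - of_nat ((r - i) * c))"
    proof -
      have "r * c = i * c + (r - i) * c" using that by (simp add: add_mult_distrib[symmetric])
      then have "(of_nat (r * c) :: 'r) = of_nat (i * c) + of_nat ((r - i) * c)" by simp
      then show ?thesis by (simp add: algebra_simps)
    qed
    have "cm (X - of_nat (i * c)) (v (r - i))"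
      apply (rule alg_cm[of S T])
        apply (fact cmST)
       apply (rule alg_diff[OF X alg_of_nat])
      apply (rule vA)
      done
    then have cmv: "cm (v (r - i)) (X - of_nat (i * c))" by (rule cm_sym)
    have "u i * v (r - i) * (X + Y - of_nat (r * c)) =
          u i * (v (r - i) * (X - of_nat (i * c))) + u i * (v (r - i) * (Y - of_nat ((r - i) * c)))"
      by (simp only: sp distrib_left mult.assoc)
    also have "\<dots> \<approx> u i * ((X - of_nat (i * c)) * v (r - i)) + u i * (v (r - i) * (Y - of_nat ((r - i) * c)))"
      using cmv unfolding cm_def by (intro eqv_add eqv_multL eqv_refl)
    also have "\<dots> = (u i * (X - of_nat (i * c))) * v (r - i) + u i * (v (r - i) * (Y - of_nat ((r - i) * c)))"
      by (simp only: mult.assoc)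
    also have "\<dots> = (of_nat (Suc i) * u (Suc i)) * v (r - i) + u i * (of_nat (Suc (r - i)) * v (Suc (r - i)))"
      by (simp only: ur vr)
    also have "\<dots> = of_nat (Suc i) * (u (Suc i) * v (r - i)) + of_nat (Suc (r - i)) * (u i * v (Suc (r - i)))"
      by (metis mult.assoc mult_of_nat_commute)
    finally show ?thesis .
  qed
  have "of_nat (Suc r) * w (Suc r) = w r * (X + Y - of_nat (r * c))"
    by (rule wr[symmetric])
  also have "\<dots> \<approx> (\<Sum>i\<le>r. u i * v (r - i)) * (X + Y - of_nat (r * c))"
    by (rule eqv_multR[OF Suc])
  also have "\<dots> = (\<Sum>i\<le>r. u i * v (r - i) * (X + Y - of_nat (r * c)))"
    by (simp add: sum_distrib_right)
  also have "\<dots> \<approx> (\<Sum>i\<le>r. of_nat (Suc i) * (u (Suc i) * v (r - i)) + of_nat (Suc (r - i)) * (u i * v (Suc (r - i))))"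
    by (rule eqv_sum, rule step) simp
  also have "\<dots> = (\<Sum>i\<le>r. of_nat (Suc i) * (u (Suc i) * v (Suc r - Suc i))) +
                   (\<Sum>i\<le>r. of_nat (Suc r - i) * (u i * v (Suc r - i)))"
    by (simp only: sum.distrib diff_Suc_Suc) (intro arg_cong2[where f="(+)"] sum.cong refl, simp add: Suc_diff_le)
  also have "(\<Sum>i\<le>r. of_nat (Suc i) * (u (Suc i) * v (Suc r - Suc i))) = (\<Sum>i\<le>Suc r. of_nat i * (u i * v (Suc r - i)))"
    by (simp only: sum.atMost_Suc_shift[of "\<lambda>i. of_nat i * (u i * v (Suc r - i))"]) simp
  also have "(\<Sum>i\<le>r. of_nat (Suc r - i) * (u i * v (Suc r - i))) = (\<Sum>i\<le>Suc r. of_nat (Suc r - i) * (u i * v (Suc r - i)))"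
    by (simp only: sum.atMost_Suc[of "\<lambda>i. of_nat (Suc r - i) * (u i * v (Suc r - i))"]) simp
  also have "(\<Sum>i\<le>Suc r. of_nat i * (u i * v (Suc r - i))) + (\<Sum>i\<le>Suc r. of_nat (Suc r - i) * (u i * v (Suc r - i)))
       = (\<Sum>i\<le>Suc r. of_nat (Suc r) * (u i * v (Suc r - i)))"
  proof -
    have "\<And>i. i \<in> {..Suc r} \<Longrightarrow> of_nat i * (u i * v (Suc r - i)) + of_nat (Suc r - i) * (u i * v (Suc r - i))
          = of_nat (Suc r) * (u i * v (Suc r - i))"
    proof -
      fix i assume "i \<in> {..Suc r}"
      then have "(of_nat i :: 'r) + of_nat (Suc r - i) = of_nat (Suc r)"
        by (simp only: of_nat_add[symmetric]) simp
      then show "of_nat i * (u i * v (Suc r - i)) + of_nat (Suc r - i) * (u i * v (Suc r - i))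
          = of_nat (Suc r) * (u i * v (Suc r - i))" by (simp only: distrib_right[symmetric])
    qed
    then show ?thesis by (simp only: sum.distrib[symmetric]) (rule sum.cong, rule refl)
  qed
  also have "\<dots> = of_nat (Suc r) * (\<Sum>i\<le>Suc r. u i * v (Suc r - i))"
    by (simp only: sum_distrib_left)
  finally show ?case by (rule eqv_cancel_nat)
qed

lemma shift1:
  assumes "E * Z \<approx> (Z - 1) * E"
  shows "E * fall Z j \<approx> fall (Z - 1) j * E"
proof (induction j)
  case 0 then show ?case by simp
next
  case (Suc j)
  have "E * fall Z (Suc j) = (E * fall Z j) * (Z - of_nat j)" by (simp add: mult.assoc)
  also have "\<dots> \<approx> (fall (Z - 1) j * E) * (Z - of_nat j)" by (rule eqv_multR[OF Suc])
  also have "\<dots> = fall (Z - 1) j * (E * Z - E * of_nat j)" by (simp add: mult.assoc algebra_simps)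
  also have "\<dots> \<approx> fall (Z - 1) j * ((Z - 1) * E - of_nat j * E)"
    by (intro eqv_multL eqv_diff assms) (simp add: mult_of_nat_commute)
  also have "\<dots> = fall (Z - 1) (Suc j) * E" by (simp add: mult.assoc algebra_simps)
  finally show ?case .
qed

lemma shiftE:
  assumes h: "E * X \<approx> (X - 1) * E"
  shows "E ^ i * fall X j \<approx> fall (X - of_nat i) j * E ^ i"
proof (induction i)
  case 0 then show ?case by simp
next
  case (Suc i)
  have hi: "E * (X - of_nat i) \<approx> (X - of_nat i - 1) * E"
  proof -
    have "E * (X - of_nat i) = E * X - of_nat i * E" by (simp add: algebra_simps mult_of_nat_commute)
    also have "\<dots> \<approx> (X - 1) * E - of_nat i * E" by (intro eqv_diff h eqv_refl)
    also have "\<dots> = (X - of_nat i - 1) * E" by (simp add: algebra_simps)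
    finally show ?thesis .
  qed
  have "E ^ Suc i * fall X j = E * (E ^ i * fall X j)" by (simp add: mult.assoc)
  also have "\<dots> \<approx> E * (fall (X - of_nat i) j * E ^ i)" by (rule eqv_multL[OF Suc])
  also have "\<dots> = (E * fall (X - of_nat i) j) * E ^ i" by (simp add: mult.assoc)
  also have "\<dots> \<approx> (fall (X - of_nat i - 1) j * E) * E ^ i" by (rule eqv_multR[OF shift1[OF hi]])
  also have "\<dots> = fall (X - of_nat (Suc i)) j * E ^ Suc i" by (simp add: mult.assoc algebra_simps)
  finally show ?case .
qed

definition B :: "'r \<Rightarrow> nat \<Rightarrow> 'r" where
  "B X r = sc (1 / fact r) * fall X r"

definition DP :: "'r \<Rightarrow> nat \<Rightarrow> 'r" where
  "DP X r = sc (1 / fact r) * X ^ r"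

lemma fact_ratio: "of_nat (Suc i) * (1 / fact (Suc i)) = (1 / fact i :: 'k)"
proof -
  have a: "(of_nat (Suc i)::'k) \<noteq> 0" by (rule of_nat_neq_0)
  have b: "(fact i::'k) \<noteq> 0" by simp
  show ?thesis unfolding fact_Suc[of i] using a b by (simp del: of_nat_Suc)
qed

lemma B_rec: "B X i * (X - of_nat (i * 1)) = of_nat (Suc i) * B X (Suc i)"
proof -
  have "of_nat (Suc i) * B X (Suc i) = sc (of_nat (Suc i) * (1 / fact (Suc i))) * fall X (Suc i)"
    by (simp only: B_def sc_mult sc_of_nat mult.assoc)
  also have "\<dots> = sc (1 / fact i) * (fall X i * (X - of_nat i))"
    by (simp only: fact_ratio fall.simps)
  finally show ?thesis by (simp add: B_def mult.assoc)
qed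

lemma DP_rec: "DP X i * (X - of_nat (i * 0)) = of_nat (Suc i) * DP X (Suc i)"
proof -
  have "of_nat (Suc i) * DP X (Suc i) = sc (of_nat (Suc i) * (1 / fact (Suc i))) * X ^ Suc i"
    by (simp only: DP_def sc_mult sc_of_nat mult.assoc)
  also have "\<dots> = sc (1 / fact i) * (X ^ i * X)"
    by (simp only: fact_ratio power_Suc2)
  finally show ?thesis by (simp add: DP_def mult.assoc)
qed

lemma alg_B: "X \<in> alg S \<Longrightarrow> B X r \<in> alg S"
  unfolding B_def by (intro a_mult alg_sc alg_fall)

lemma alg_DP: "X \<in> alg S \<Longrightarrow> DP X r \<in> alg S"
  unfolding DP_def by (intro a_mult alg_sc alg_pow)

lemma vdmB:
  assumes "\<And>s t. s \<in> S \<Longrightarrow> t \<in> T \<Longrightarrow> cm s t" "X \<in> alg S" "Y \<in> alg T"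
  shows "B (X + Y) r \<approx> (\<Sum>i\<le>r. B X i * B Y (r - i))"
  by (rule vdm[OF assms, where c=1 and u="B X" and v="B Y" and w="B (X + Y)"];
      (rule B_rec | rule alg_B, rule assms | simp add: B_def sc_one))

lemma vdmDP:
  assumes "\<And>s t. s \<in> S \<Longrightarrow> t \<in> T \<Longrightarrow> cm s t" "X \<in> alg S" "Y \<in> alg T"
  shows "DP (X + Y) r \<approx> (\<Sum>i\<le>r. DP X i * DP Y (r - i))"
  by (rule vdm[OF assms, where c=0 and u="DP X" and v="DP Y" and w="DP (X + Y)"];
      (rule DP_rec | rule alg_DP, rule assms | simp add: DP_def sc_one))

lemma B_split: "a \<le> j \<Longrightarrow> sc (fact j / (fact a * fact (j - a))) * B X j = B X a * B (X - of_nat a) (j - a)"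
proof -
  assume "a \<le> j"
  then obtain d where j: "j = a + d" by (metis le_add_diff_inverse)
  have "sc (fact j / (fact a * fact (j - a))) * B X j = sc (fact j / (fact a * fact (j - a)) * (1 / fact j)) * fall X j"
    by (simp only: B_def sc_mult mult.assoc)
  also have "fact j / (fact a * fact (j - a)) * (1 / fact j) = (1 / fact a) * (1 / fact d :: 'k)"
    by (simp add: j field_simps)
  also have "sc (1 / fact a * (1 / fact d)) * fall X j = B X a * B (X - of_nat a) d"
  proof -
    have "sc (1 / fact d) * (fall X a * fall (X - of_nat a) d) = fall X a * (sc (1 / fact d) * fall (X - of_nat a) d)"
      using sc_comm[of "1/fact d" "fall X a"] by (simp only: mult.assoc[symmetric])
    then show ?thesis unfolding B_def j fall_split sc_mult by (simp only: mult.assoc)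
  qed
  finally show ?thesis by (simp add: j)
qed

end




lift_definition sc :: "'a::field \<Rightarrow> 'a fa" is "\<lambda>c. fa_smult c fa_one"
  by (rule finite_subset[of _ "{[]}"]) (auto simp: fa_smult_def fa_one_def)

lift_definition genT :: "gen \<Rightarrow> 'a::field fa" is fa_gen
  by (rule finite_subset[of _ "{[g]}" for g]) (auto simp: fa_gen_def)

lift_definition word :: "gen list \<Rightarrow> 'a::field fa" is fa_word
  by (rule finite_subset[of _ "{u}" for u]) (auto simp: fa_word_def)

lemma rep_times: "rep (x * y) = fa_mult (rep x) (rep y)"
  by transfer simp
lemma rep_plus: "rep (x + y) = fa_add (rep x) (rep y)"
  by transfer (simp add: fa_add_def)
lemma rep_minus: "rep (x - y) = fa_sub (rep x) (rep y)"
  by transfer (simp add: fa_sub_def)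
lemma rep_one: "rep (1::'a::field fa) = fa_one"
  by transfer simp
lemma rep_zero: "rep (0::'a::field fa) = fa_zero"
  by transfer (simp add: fa_zero_def)
lemma rep_sc: "rep (sc c) = fa_smult c fa_one"
  by transfer simp
lemma rep_genT: "rep (genT g) = fa_gen g"
  by transfer simp
lemma rep_word: "rep (word u) = fa_word u"
  by transfer simp

lemma rep_sum: "rep (sum f A) w = (\<Sum>a\<in>A. rep (f a) w)"
  by (induction A rule: infinite_finite_induct) (simp_all add: rep_zero fa_zero_def rep_plus fa_add_def)

lemma fa_mult_sc_left: "fa_mult (fa_smult c fa_one) x = fa_smult c x"
  unfolding fa_smult_def by (rule ext) (simp add: fa_mult_smultL fa_mult_oneL)
lemma fa_mult_sc_right: "fa_mult x (fa_smult c fa_one) = fa_smult c x"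
  unfolding fa_smult_def by (rule ext) (simp add: fa_mult_smultR fa_mult_oneR)

lemma rep_sc_times: "rep (sc c * x) = fa_smult c (rep x)"
  by (simp add: rep_times rep_sc fa_mult_sc_left)
lemma rep_times_sc: "rep (x * sc c) = fa_smult c (rep x)"
  by (simp add: rep_times rep_sc fa_mult_sc_right)

lemma rep_inject': "rep x = rep y \<Longrightarrow> x = y"
  by (simp add: rep_inject)

lemma sc_comm': "sc c * x = x * sc c"
  by (rule rep_inject') (simp add: rep_sc_times rep_times_sc)
lemma sc_add': "sc (a + b) = sc a + sc b"
  by (rule rep_inject') (simp add: rep_sc rep_plus fa_smult_def fa_add_def distrib_right)
lemma sc_mult': "sc (a * b) = sc a * sc b"
  by (rule rep_inject') (simp add: rep_sc rep_sc_times fa_smult_def mult.assoc)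
lemma sc_one': "sc 1 = 1"
  by (rule rep_inject') (simp add: rep_sc rep_one fa_smult_def)

lemma fa_word_Nil: "fa_word [] = fa_one"
  by (simp add: fa_word_def fa_one_def)

lemma expand: "y = (\<Sum>u\<in>{w. rep y w \<noteq> 0}. sc (rep y u) * word u)"
proof (rule rep_inject', rule ext)
  fix w
  have fin: "finite {w. rep y w \<noteq> 0}" using rep by auto
  have "rep (\<Sum>u\<in>{w. rep y w \<noteq> 0}. sc (rep y u) * word u) w = (\<Sum>u\<in>{w. rep y w \<noteq> 0}. rep y u * (if w = u then 1 else 0))"
    by (simp add: rep_sum rep_sc_times rep_word fa_smult_def fa_word_def)
  also have "\<dots> = rep y w"
    using fin by (simp add: if_distrib[of "(*) _"] sum.delta' cong: if_cong)
  finally show "rep y w = rep (\<Sum>u\<in>{w. rep y w \<noteq> 0}. sc (rep y u) * word u) w" by simp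
qed

definition Iset :: "nat \<Rightarrow> nat \<Rightarrow> 'a::field fa set" where
  "Iset n m = {x. rep x \<in> ideal n m}"

lemma Iset_sc: "x \<in> Iset n m \<Longrightarrow> sc c * x \<in> Iset n m"
  unfolding Iset_def by (simp add: rep_sc_times ideal.smult)

lemma Iset_add: "x \<in> Iset n m \<Longrightarrow> y \<in> Iset n m \<Longrightarrow> x + y \<in> Iset n m"
  unfolding Iset_def by (simp add: rep_plus ideal.add)

lemma Iset_zero: "0 \<in> Iset n m"
  unfolding Iset_def by (simp add: rep_zero ideal.zero)

lemma Iset_sum: "(\<And>a. a \<in> A \<Longrightarrow> f a \<in> Iset n m) \<Longrightarrow> sum f A \<in> Iset n m"
proof (induction A rule: infinite_finite_induct)
  case (insert x F) then show ?case by (simp add: Iset_add)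
qed (simp_all add: Iset_zero)

lemma fa_mult_assoc: "fa_mult (fa_mult x y) z = fa_mult x (fa_mult y z)"
  by (rule ext, rule fa_mult_assoc_pt)

lemma Iset_words: "x \<in> Iset n m \<Longrightarrow> word u * x * word v \<in> Iset n m"
  unfolding Iset_def by (simp add: rep_times rep_word fa_mult_assoc ideal.mult)

lemma Iset_L: "x \<in> Iset n m \<Longrightarrow> y * x \<in> Iset n m"
proof -
  assume x: "x \<in> Iset n m"
  have "y * x = (\<Sum>u\<in>{w. rep y w \<noteq> 0}. sc (rep y u) * (word u * x * word []))"
    apply (subst expand[of y])
    apply (simp add: sum_distrib_right mult.assoc)
    apply (rule sum.cong, rule refl)
    apply (subgoal_tac "word [] = (1::'a fa)")
     apply simp
    apply (rule rep_inject') apply (simp add: rep_word rep_one fa_word_Nil)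
    done
  also have "\<dots> \<in> Iset n m"
    by (rule Iset_sum, rule Iset_sc, rule Iset_words[OF x])
  finally show ?thesis .
qed

lemma Iset_R: "x \<in> Iset n m \<Longrightarrow> x * y \<in> Iset n m"
proof -
  assume x: "x \<in> Iset n m"
  have w1: "word [] = (1::'a fa)" by (rule rep_inject') (simp add: rep_word rep_one fa_word_Nil)
  have "x * y = (\<Sum>u\<in>{w. rep y w \<noteq> 0}. sc (rep y u) * (word [] * x * word u))"
    apply (subst expand[of y])
    apply (simp add: sum_distrib_left mult.assoc w1)
    apply (rule sum.cong, rule refl)
    apply (metis mult.assoc sc_comm')
    done
  also have "\<dots> \<in> Iset n m"
    by (rule Iset_sum, rule Iset_sc, rule Iset_words[OF x])
  finally show ?thesis .
qed

interpretation Q: qalg "Iset n m" sc for n m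
  by unfold_locales (auto intro: Iset_zero Iset_add Iset_L Iset_R sc_add' sc_mult' sc_one' sc_comm')




lemma Q_eqv_iff: "Q.eqv n m x y \<longleftrightarrow> rep (x - y) \<in> ideal n m"
  by (unfold Q.eqv_def, unfold Iset_def) simp

lemma rel_same:
  assumes "j < m" "valid_exp n \<alpha>" "valid_exp n \<beta>" "bracket_elem n j \<alpha> \<beta> = rep z"
  shows "Q.eqv n m (genT (j,\<alpha>) * genT (j,\<beta>)) (genT (j,\<beta>) * genT (j,\<alpha>) + (z::'a::field_char_0 fa))"
proof -
  have "fa_sub (fa_sub (fa_mult (fa_gen (j, \<alpha>)) (fa_gen (j, \<beta>))) (fa_mult (fa_gen (j, \<beta>)) (fa_gen (j, \<alpha>))))
             (bracket_elem n j \<alpha> \<beta> :: gen list \<Rightarrow> 'a) \<in> rels n m"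
    unfolding rels_def using assms by blast
  note r = ideal.rel[OF this]
  have "rep (genT (j,\<alpha>) * genT (j,\<beta>) - genT (j,\<beta>) * genT (j,\<alpha>) - z) \<in> ideal n m"
    using r[unfolded assms(4)] by (simp add: rep_minus rep_times rep_genT)
  then show ?thesis by (simp add: Q_eqv_iff algebra_simps)
qed

lemma rel_diff:
  assumes "j < m" "l < m" "j \<noteq> l" "valid_exp n \<alpha>" "valid_exp n \<beta>"
  shows "Q.eqv n m (genT (j,\<alpha>) * genT (l,\<beta>)) (genT (l,\<beta>) * (genT (j,\<alpha>) :: 'a::field_char_0 fa))"
proof -
  have "fa_sub (fa_mult (fa_gen (j, \<alpha>)) (fa_gen (l, \<beta>))) (fa_mult (fa_gen (l, \<beta>)) (fa_gen (j, \<alpha>)) :: gen list \<Rightarrow> 'a) \<in> rels n m"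
    unfolding rels_def using assms by blast
  note r = ideal.rel[OF this]
  have "rep (genT (j,\<alpha>) * genT (l,\<beta>) - genT (l,\<beta>) * (genT (j,\<alpha>) :: 'a fa)) \<in> ideal n m"
    using r by (simp add: rep_minus rep_times rep_genT)
  then show ?thesis by (simp add: Q_eqv_iff)
qed

definition pm :: "int \<Rightarrow> (int \<Rightarrow> int) \<Rightarrow> bool" where
  "pm k \<alpha> \<longleftrightarrow> (\<forall>i. \<alpha> i \<noteq> 0 \<longrightarrow> i = k \<or> i = -k)"

lemma pm_h: "pm k (h_exp k)" by (simp add: pm_def h_exp_def)
lemma pm_e: "pm k (e_exp k)" by (simp add: pm_def e_exp_def)

lemma valid_h: "1 \<le> k \<Longrightarrow> k \<le> int n \<Longrightarrow> valid_exp n (h_exp k)"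
  by (auto simp: valid_exp_def h_exp_def)
lemma valid_e: "1 \<le> k \<Longrightarrow> k \<le> int n \<Longrightarrow> valid_exp n (e_exp k)"
  by (auto simp: valid_exp_def e_exp_def)

lemma brk_zero:
  assumes "1 \<le> k" "1 \<le> k'" "k \<noteq> k'" "pm k \<alpha>" "pm k' \<beta>"
  shows "brk_coef n \<alpha> \<beta> \<gamma> = 0"
proof -
  have a0: "\<alpha> 0 = 0" using assms(1,4) unfolding pm_def by force
  have b0: "\<beta> 0 = 0" using assms(2,5) unfolding pm_def by force
  have c: "\<alpha> (-i) * \<beta> i - \<alpha> i * \<beta> (-i) = 0" if "i \<in> {1..int n}" for i
  proof -
    have p1: "\<alpha> (-i) * \<beta> i = 0"
    proof (rule ccontr)
      assume "\<alpha> (-i) * \<beta> i \<noteq> 0"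
      then have "\<alpha> (-i) \<noteq> 0" "\<beta> i \<noteq> 0" by auto
      then show False using assms that unfolding pm_def by force
    qed
    have p2: "\<alpha> i * \<beta> (-i) = 0"
    proof (rule ccontr)
      assume "\<alpha> i * \<beta> (-i) \<noteq> 0"
      then have "\<alpha> i \<noteq> 0" "\<beta> (-i) \<noteq> 0" by auto
      then show False using assms that unfolding pm_def by force
    qed
    show ?thesis by (metis p1 p2 diff_self)
  qed
  show ?thesis unfolding brk_coef_def using a0 b0 c by (simp add: sum.neutral)
qed

lemma bracket_zero:
  assumes "1 \<le> k" "1 \<le> k'" "k \<noteq> k'" "pm k \<alpha>" "pm k' \<beta>"
  shows "bracket_elem n j \<alpha> \<beta> = rep (0::'a::field_char_0 fa)"
  unfolding bracket_elem_def rep_zero fa_zero_def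
  by (rule ext) (simp only: brk_zero[OF assms] of_int_0 if_cancel)

lemma brk_he:
  assumes "1 \<le> k" "k \<le> int n"
  shows "brk_coef n (h_exp k) (e_exp k) \<gamma> = (if \<gamma> = e_exp k then 1 else 0)"
proof -
  have t: "(if \<gamma> = (\<lambda>j. h_exp k j + e_exp k j - unitv i j - unitv (-i) j)
            then h_exp k (-i) * e_exp k i - h_exp k i * e_exp k (-i) else 0)
         = (if i = k then (if \<gamma> = e_exp k then 1 else 0) else 0)" if "i \<in> {1..int n}" for i
  proof (cases "i = k")
    case True
    have "(\<lambda>j. h_exp k j + e_exp k j - unitv i j - unitv (-i) j) = e_exp k"
      using True assms by (auto simp: h_exp_def e_exp_def unitv_def fun_eq_iff)
    moreover have "h_exp k (-i) * e_exp k i - h_exp k i * e_exp k (-i) = 1"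
      using True assms by (simp add: h_exp_def e_exp_def)
    ultimately show ?thesis using True by simp
  next
    case False
    have "h_exp k (-i) * e_exp k i - h_exp k i * e_exp k (-i) = 0"
      using False assms that by (auto simp: h_exp_def e_exp_def)
    then show ?thesis using False by simp
  qed
  have "brk_coef n (h_exp k) (e_exp k) \<gamma> = (\<Sum>i\<in>{1..int n}. if i = k then (if \<gamma> = e_exp k then 1 else 0) else 0)"
  proof -
    have h0: "h_exp k 0 = 0" "e_exp k 0 = 0" using assms by (auto simp: h_exp_def e_exp_def)
    show ?thesis unfolding brk_coef_def using t by (simp add: h0)
  qed
  also have "\<dots> = (if \<gamma> = e_exp k then 1 else 0)"
    using assms by (simp add: sum.delta)
  finally show ?thesis .
qed

lemma bracket_he:
  assumes "1 \<le> k" "k \<le> int n"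
  shows "bracket_elem n j (h_exp k) (e_exp k) = rep (genT (j, e_exp k) :: 'a::field_char_0 fa)"
  using brk_he[OF assms] by (auto simp: bracket_elem_def rep_genT fa_gen_def fun_eq_iff)




primrec W :: "(gen \<Rightarrow> 'a::field fa) \<Rightarrow> gen list \<Rightarrow> 'a fa" where
  "W \<Phi> [] = 1"
| "W \<Phi> (g # w) = \<Phi> g * W \<Phi> w"

definition homT :: "(gen \<Rightarrow> 'a::field fa) \<Rightarrow> 'a fa \<Rightarrow> 'a fa" where
  "homT \<Phi> x = (\<Sum>w\<in>{w. rep x w \<noteq> 0}. sc (rep x w) * W \<Phi> w)"

lemma fin_rep: "finite {w. rep x w \<noteq> 0}"
  using rep[of x] by simp

lemma sc_zero'[simp]: "sc 0 = 0"
  by (rule rep_inject') (simp add: rep_sc rep_zero fa_smult_def fa_zero_def)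

lemma homT_lin:
  assumes "finite S" "{w. rep x w \<noteq> 0} \<subseteq> S"
  shows "homT \<Phi> x = (\<Sum>w\<in>S. sc (rep x w) * W \<Phi> w)"
  unfolding homT_def by (rule sum.mono_neutral_left) (use assms in auto)

lemma rep_plus_pt: "rep (x + y) w = rep x w + rep y w"
  by (simp add: rep_plus fa_add_def)

lemma rep_sc_times_pt: "rep (sc c * x) w = c * rep x w"
  by (simp add: rep_sc_times fa_smult_def)

lemma homT_add: "homT \<Phi> (x + y) = homT \<Phi> x + homT \<Phi> y"
proof -
  let ?S = "{w. rep x w \<noteq> 0} \<union> {w. rep y w \<noteq> 0}"
  have f: "finite ?S" using fin_rep by auto
  have "homT \<Phi> (x + y) = (\<Sum>w\<in>?S. sc (rep (x + y) w) * W \<Phi> w)"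
    by (rule homT_lin[OF f]) (auto simp: rep_plus_pt)
  also have "\<dots> = (\<Sum>w\<in>?S. sc (rep x w) * W \<Phi> w) + (\<Sum>w\<in>?S. sc (rep y w) * W \<Phi> w)"
    by (simp add: rep_plus_pt sc_add' distrib_right sum.distrib)
  also have "\<dots> = homT \<Phi> x + homT \<Phi> y"
    by (simp add: homT_lin[OF f])
  finally show ?thesis .
qed

lemma homT_sc: "homT \<Phi> (sc c * x) = sc c * homT \<Phi> x"
proof -
  let ?S = "{w. rep x w \<noteq> 0}"
  have "homT \<Phi> (sc c * x) = (\<Sum>w\<in>?S. sc (rep (sc c * x) w) * W \<Phi> w)"
    by (rule homT_lin[OF fin_rep]) (auto simp: rep_sc_times_pt)
  also have "\<dots> = sc c * homT \<Phi> x"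
    unfolding homT_def rep_sc_times_pt sc_mult' sum_distrib_left by (simp only: mult.assoc)
  finally show ?thesis .
qed

lemma homT_zero: "homT \<Phi> 0 = 0"
  by (simp add: homT_def rep_zero fa_zero_def)

lemma homT_sum: "homT \<Phi> (sum f A) = (\<Sum>a\<in>A. homT \<Phi> (f a))"
  by (induction A rule: infinite_finite_induct) (simp_all add: homT_zero homT_add)

lemma rep_one_pt: "rep 1 w = (if w = [] then 1 else 0)"
  by (simp add: rep_one fa_one_def)

lemma homT_one: "homT \<Phi> 1 = 1"
proof -
  have "homT \<Phi> 1 = (\<Sum>w\<in>{[]}. sc (rep 1 w) * W \<Phi> w)"
    by (rule homT_lin) (auto simp: rep_one_pt split: if_splits)
  then show ?thesis by (simp add: rep_one_pt sc_one')
qed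

lemma rep_gen_times: "rep (genT g * z) w = (case w of [] \<Rightarrow> 0 | a # w' \<Rightarrow> if a = g then rep z w' else 0)"
proof (cases w)
  case Nil then show ?thesis by (simp add: rep_times rep_genT fa_mult_Nil fa_gen_def)
next
  case (Cons a w')
  have e: "(\<lambda>u. fa_gen g (a # u)) = (if a = g then fa_one else (\<lambda>_. 0))"
    by (auto simp: fa_gen_def fa_one_def fun_eq_iff)
  show ?thesis using Cons
    by (simp add: rep_times rep_genT fa_mult_Cons e fa_mult_oneL fa_mult_zeroL) (simp add: fa_gen_def)
qed

lemma homT_gen_mult: "homT \<Phi> (genT g * z) = \<Phi> g * homT \<Phi> z"
proof -
  let ?S = "{w. rep z w \<noteq> 0}"
  have "homT \<Phi> (genT g * z) = (\<Sum>w\<in>(Cons g) ` ?S. sc (rep (genT g * z) w) * W \<Phi> w)"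
    apply (rule homT_lin, simp add: fin_rep)
    apply (rule subsetI)
    subgoal for w by (cases w) (auto simp: rep_gen_times split: if_splits)
    done
  also have "\<dots> = (\<Sum>w\<in>?S. sc (rep z w) * (\<Phi> g * W \<Phi> w))"
    by (simp add: sum.reindex rep_gen_times)
  also have "\<dots> = \<Phi> g * homT \<Phi> z"
    unfolding homT_def sum_distrib_left by (rule sum.cong, rule refl) (metis mult.assoc sc_comm')
  finally show ?thesis .
qed

lemma word_Cons: "word (g # u) = genT g * word u"
  by (rule rep_inject', rule ext) (simp add: rep_gen_times rep_word fa_word_def split: list.splits)

lemma word_Nil: "word [] = 1"
  by (rule rep_inject') (simp add: rep_word rep_one fa_word_Nil)

lemma homT_word_mult: "homT \<Phi> (word u * y) = W \<Phi> u * homT \<Phi> y"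
  by (induction u) (simp_all add: word_Nil word_Cons mult.assoc homT_gen_mult)

lemma homT_mult: "homT \<Phi> (x * y) = homT \<Phi> x * homT \<Phi> y"
proof -
  have "homT \<Phi> (x * y) = homT \<Phi> (\<Sum>u\<in>{w. rep x w \<noteq> 0}. sc (rep x u) * (word u * y))"
    by (subst expand[of x]) (simp add: sum_distrib_right mult.assoc)
  also have "\<dots> = (\<Sum>u\<in>{w. rep x w \<noteq> 0}. sc (rep x u) * W \<Phi> u) * homT \<Phi> y"
    by (simp add: homT_sum homT_sc homT_word_mult sum_distrib_right mult.assoc)
  finally show ?thesis by (simp add: homT_def)
qed

lemma homT_genT: "homT \<Phi> (genT g) = \<Phi> g"
  using homT_gen_mult[of \<Phi> g 1] by (simp add: homT_one)

lemma homT_sc1: "homT \<Phi> (sc c) = sc c"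
  using homT_sc[of \<Phi> c 1] by (simp add: homT_one)

lemma sc_minus1: "- x = sc (-1) * x"
proof -
  have a: "sc (-1) + 1 = (0::'a fa)" using sc_add'[of "-1" 1] by (simp add: sc_one')
  have "sc (-1) * x + x = (sc (-1) + 1) * x" by (simp add: distrib_right)
  then have "sc (-1) * x + x = 0" by (simp only: a mult_zero_left)
  then show ?thesis by (metis neg_eq_iff_add_eq_0 add.commute)
qed

lemma homT_uminus: "homT \<Phi> (- x) = - homT \<Phi> x"
proof -
  have "homT \<Phi> (- x) = homT \<Phi> (sc (-1) * x)" by (subst sc_minus1[of x]) (rule refl)
  also have "\<dots> = sc (-1) * homT \<Phi> x" by (rule homT_sc)
  also have "\<dots> = - homT \<Phi> x" by (rule sc_minus1[symmetric])
  finally show ?thesis .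
qed

lemma homT_diff: "homT \<Phi> (x - y) = homT \<Phi> x - homT \<Phi> y"
  by (simp only: diff_conv_add_uminus homT_add homT_uminus)

lemma homT_of_nat: "homT \<Phi> (of_nat k) = of_nat k"
  by (induction k) (simp_all add: homT_zero homT_one homT_add)

lemma homT_pow: "homT \<Phi> (x ^ r) = homT \<Phi> x ^ r"
  by (induction r) (simp_all add: homT_one homT_mult)

lemma homT_fall: "homT \<Phi> (fall x r) = fall (homT \<Phi> x) r"
  by (induction r) (simp_all add: homT_one homT_mult homT_diff homT_of_nat)

lemma rep_W: "(\<And>g. rep (\<Phi> g) = \<phi> g) \<Longrightarrow> rep (W \<Phi> w) = wprod \<phi> w"
  by (induction w) (simp_all add: rep_one rep_times)

lemma fa_hom_rep:
  assumes "\<And>g. rep (\<Phi> g) = \<phi> g"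
  shows "fa_hom \<phi> (rep x) = rep (homT \<Phi> x)"
  by (rule ext) (simp add: fa_hom_def homT_def rep_sum rep_sc_times_pt rep_W[OF assms])

definition PDL :: "gen \<Rightarrow> 'a::field fa" where
  "PDL g = (if fst g = 0 then genT (0, snd g) + genT (1, snd g) else genT (fst g + 1, snd g))"
definition PDR :: "gen \<Rightarrow> 'a::field fa" where
  "PDR g = (if fst g = 0 then genT g else genT (fst g, snd g) + genT (fst g + 1, snd g))"
definition PSH :: "gen \<Rightarrow> 'a::field fa" where
  "PSH g = genT (fst g + 1, snd g)"
definition PEL :: "gen \<Rightarrow> 'a::field fa" where
  "PEL g = (if fst g = 0 then 0 else genT (fst g - 1, snd g))"
definition PER :: "gen \<Rightarrow> 'a::field fa" where
  "PER g = (if fst g = 0 then genT g else 0)"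

lemma rep_PDL: "rep (PDL g) = delta_left g"
  by (simp add: PDL_def delta_left_def rep_plus rep_genT)
lemma rep_PDR: "rep (PDR g) = delta_right g"
  by (simp add: PDR_def delta_right_def rep_plus rep_genT)
lemma rep_PSH: "rep (PSH g) = shift_slot g"
  by (simp add: PSH_def shift_slot_def rep_genT)
lemma rep_PEL: "rep (PEL g) = eps_left g"
  by (simp add: PEL_def eps_left_def rep_genT rep_zero)
lemma rep_PER: "rep (PER g) = eps_right g"
  by (simp add: PER_def eps_right_def rep_genT rep_zero)




definition H :: "nat \<Rightarrow> int \<Rightarrow> 'a::field_char_0 fa" where "H j k = genT (j, h_exp k)"
definition E :: "nat \<Rightarrow> int \<Rightarrow> 'a::field_char_0 fa" where "E j k = genT (j, e_exp k)"
definition Tw :: "int \<Rightarrow> nat \<Rightarrow> 'a::field_char_0 fa" where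
  "Tw k r = sc ((-1) ^ r / fact r) * (fall (H 0 k) r * E 1 k ^ r)"

definition smul :: "'a::field \<Rightarrow> 'a fa \<Rightarrow> 'a fa" where
  "smul c x = sc c * x"

lemma smul_tl: "smul c x * y = smul c (x * y)"
  unfolding smul_def by (simp add: mult.assoc)
lemma smul_tr: "x * smul c y = smul c (x * y)"
  unfolding smul_def by (metis mult.assoc sc_comm')
lemma smul_smul: "smul c (smul d x) = smul (c * d) x"
  unfolding smul_def by (simp add: sc_mult' mult.assoc)
lemma smul_1: "smul 1 x = x"
  unfolding smul_def by (simp add: sc_one')

lemmas scs = mult.assoc smul_tl smul_tr smul_smul smul_1

lemma B_smul: "Q.B X r = smul (1 / fact r) (fall X r)"
  unfolding Q.B_def smul_def ..

lemma homT_smul: "homT \<Phi> (smul c x) = smul c (homT \<Phi> x)"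
  unfolding smul_def by (rule homT_sc)

lemma homT_B: "homT \<Phi> (Q.B X r) = Q.B (homT \<Phi> X) r"
  unfolding B_smul by (simp add: homT_smul homT_fall)

lemma Tw_B: "Tw k r = smul ((-1) ^ r) (Q.B (H 0 k) r * E 1 k ^ r)"
  unfolding Tw_def B_smul by (simp add: smul_def[symmetric] scs)

lemma homT_Tw: "homT \<Phi> (Tw k r) = smul ((-1) ^ r) (Q.B (homT \<Phi> (H 0 k)) r * homT \<Phi> (E 1 k) ^ r)"
  unfolding Tw_B by (simp add: homT_mult homT_smul homT_B homT_pow)

lemma cm_slots:
  assumes "j < m" "l < m" "j \<noteq> l" "valid_exp n \<alpha>" "valid_exp n \<beta>"
  shows "Q.cm n m (genT (j,\<alpha>)) (genT (l,\<beta>) :: 'a::field_char_0 fa)"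
  unfolding Q.cm_def using rel_diff[OF assms] .

lemma rel_EH:
  assumes "j < m" "1 \<le> k" "k \<le> int n"
  shows "Q.eqv n m (E j k * H j k) ((H j k - 1) * (E j k :: 'a::field_char_0 fa))"
proof -
  have r: "Q.eqv n m (H j k * E j k) (E j k * H j k + (E j k :: 'a fa))"
    unfolding H_def E_def
    by (rule rel_same[OF assms(1) valid_h[OF assms(2,3)] valid_e[OF assms(2,3)] bracket_he[OF assms(2,3)]])
  have "E j k * H j k = (E j k * H j k + E j k) - E j k" by simp
  also have "Q.eqv n m \<dots> (H j k * E j k - (E j k :: 'a fa))"
    by (rule Q.eqv_diff[OF Q.eqv_sym[OF r] Q.eqv_refl])
  also have "\<dots> = (H j k - 1) * E j k" by (simp add: algebra_simps)
  finally show ?thesis .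
qed

lemma shiftB:
  assumes "Q.eqv n m (Y * X) ((X - 1) * Y)"
  shows "Q.eqv n m (Y ^ i * Q.B X j) (Q.B (X - of_nat i) j * Y ^ i)"
proof -
  have "Y ^ i * Q.B X j = sc (1 / fact j) * (Y ^ i * fall X j)" unfolding Q.B_def by (metis mult.assoc sc_comm')
  also have "Q.eqv n m \<dots> (sc (1 / fact j) * (fall (X - of_nat i) j * Y ^ i))"
    by (rule Q.eqv_multL[OF Q.shiftE[OF assms]])
  also have "\<dots> = Q.B (X - of_nat i) j * Y ^ i" unfolding Q.B_def by (simp add: mult.assoc)
  finally show ?thesis .
qed

lemma DP_smul: "Q.DP X r = smul (1 / fact r) (X ^ r)"
  unfolding Q.DP_def smul_def ..

lemma pow_DP: "X ^ r = smul (fact r) (Q.DP X r)"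
  unfolding DP_smul by (simp add: smul_smul smul_1)

lemma smul_sum: "smul c (sum f A) = (\<Sum>a\<in>A. smul c (f a))"
  unfolding smul_def by (simp add: sum_distrib_left)

lemma eqv_smul: "Q.eqv n m x y \<Longrightarrow> Q.eqv n m (smul c x) (smul c y)"
  unfolding smul_def by (rule Q.eqv_multL)

lemma B_split': "a \<le> j \<Longrightarrow> smul (fact j / (fact a * fact (j - a))) (Q.B X j) = Q.B X a * Q.B (X - of_nat a) (j - a)"
  unfolding smul_def by (rule Q.B_split)

lemma alg_B': "X \<in> Q.alg S \<Longrightarrow> Q.B X r \<in> Q.alg S"
  by (rule Q.alg_B)

context
  fixes n :: nat and k :: int
  assumes kb: "1 \<le> k" "k \<le> int n"
begin

lemma vh: "valid_exp n (h_exp k)" by (rule valid_h[OF kb])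
lemma ve: "valid_exp n (e_exp k)" by (rule valid_e[OF kb])

lemma homs:
  "homT PDL (H 0 k) = H 0 k + H 1 k" "homT PDL (E 1 k) = E 2 k"
  "homT PDR (H 0 k) = H 0 k" "homT PDR (E 1 k) = E 1 k + E 2 k"
  "homT PSH (H 0 k) = H 1 k" "homT PSH (E 1 k) = E 2 k"
  "homT PEL (H 0 k) = 0" "homT PER (E 1 k) = 0"
  by (simp_all add: H_def E_def homT_genT PDL_def PDR_def PSH_def PEL_def PER_def numeral_2_eq_2)

lemma shift_E1: "Q.eqv n 3 (E 1 k * (H 0 k + H 1 k)) ((H 0 k + H 1 k - 1) * (E 1 k :: 'a::field_char_0 fa))"
proof -
  have c: "Q.eqv n 3 (E 1 k * H 0 k) (H 0 k * (E 1 k :: 'a fa))"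
    using cm_slots[of 1 3 0 n "e_exp k" "h_exp k"] vh ve unfolding Q.cm_def H_def E_def by simp
  have "E 1 k * (H 0 k + H 1 k) = E 1 k * H 0 k + E 1 k * (H 1 k :: 'a fa)" by (simp add: algebra_simps)
  also have "Q.eqv n 3 \<dots> (H 0 k * E 1 k + (H 1 k - 1) * E 1 k)"
    by (rule Q.eqv_add[OF c rel_EH[OF _ kb]]) simp
  also have "\<dots> = (H 0 k + H 1 k - 1) * E 1 k" by (simp add: algebra_simps)
  finally show ?thesis .
qed

lemma L1:
  "Q.eqv n 3 (Tw k i * homT PDL (Tw k j))
     (smul ((-1) ^ (i + j)) (Q.B (H 0 k) i * Q.B (H 0 k + H 1 k - of_nat i) j * (E 1 k ^ i * E 2 k ^ j)) :: 'a::field_char_0 fa)"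
proof -
  have "Tw k i * homT PDL (Tw k j) = smul ((-1) ^ (i + j)) (Q.B (H 0 k) i * (E 1 k ^ i * Q.B (H 0 k + H 1 k) j) * (E 2 k ^ j :: 'a fa))"
    unfolding homT_Tw homs unfolding Tw_B by (simp add: scs power_add mult.commute)
  also have "Q.eqv n 3 \<dots> (smul ((-1) ^ (i + j)) (Q.B (H 0 k) i * (Q.B (H 0 k + H 1 k - of_nat i) j * E 1 k ^ i) * E 2 k ^ j))"
    unfolding smul_def by (intro Q.eqv_multL Q.eqv_multR shiftB shift_E1)
  also have "\<dots> = smul ((-1) ^ (i + j)) (Q.B (H 0 k) i * Q.B (H 0 k + H 1 k - of_nat i) j * (E 1 k ^ i * E 2 k ^ j))"
    by (simp add: mult.assoc)
  finally show ?thesis .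
qed

lemma cmk: "j < 3 \<Longrightarrow> l < 3 \<Longrightarrow> j \<noteq> l \<Longrightarrow> \<alpha> \<in> {h_exp k, e_exp k} \<Longrightarrow> \<beta> \<in> {h_exp k, e_exp k} \<Longrightarrow>
   Q.cm n 3 (genT (j,\<alpha>)) (genT (l,\<beta>) :: 'a::field_char_0 fa)"
  using cm_slots[of j 3 l n \<alpha> \<beta>] vh ve by auto

lemma R1a:
  assumes "a \<le> j"
  shows "Q.eqv n 3 (smul c (Q.B (H 1 k) i * (E 2 k ^ i * (Q.B (H 0 k) j * smul (fact j) (Q.DP (E 1 k) a * Q.DP (E 2 k) (j - a))))))
     (smul c (Q.B (H 0 k) a * (Q.B (H 1 k) i * Q.B (H 0 k - of_nat a) (j - a)) * (E 1 k ^ a * E 2 k ^ (i + j - a))) :: 'a::field_char_0 fa)"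
proof -
  let ?H0 = "H 0 k :: 'a fa" and ?H1 = "H 1 k :: 'a fa" and ?E1 = "E 1 k :: 'a fa" and ?E2 = "E 2 k :: 'a fa"
  let ?Y = "Q.B ?H0 a * Q.B (?H0 - of_nat a) (j - a) * ?E1 ^ a"
  have sc: "fact j * (1 / fact a * (1 / fact (j - a))) = (fact j / (fact a * fact (j - a)) :: 'a)"
    by simp
  have e1: "Q.B ?H0 j * smul (fact j) (Q.DP ?E1 a * Q.DP ?E2 (j - a)) = smul (fact j / (fact a * fact (j - a))) (Q.B ?H0 j) * (?E1 ^ a * ?E2 ^ (j - a))"
    unfolding DP_smul by (simp add: scs sc mult.commute)
  have "smul c (Q.B ?H1 i * (?E2 ^ i * (Q.B ?H0 j * smul (fact j) (Q.DP ?E1 a * Q.DP ?E2 (j - a)))))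
      = smul c (Q.B ?H1 i * ((?E2 ^ i * ?Y) * ?E2 ^ (j - a)))"
    unfolding e1 B_split'[OF assms] by (simp add: mult.assoc)
  also have "Q.eqv n 3 \<dots> (smul c (Q.B ?H1 i * ((?Y * ?E2 ^ i) * ?E2 ^ (j - a))))"
  proof -
    have "Q.cm n 3 (?E2 ^ i) ?Y"
    proof (rule Q.alg_cm[of "{?E2}" "{?H0, ?E1}"])
      fix s t assume "s \<in> {?E2}" "t \<in> {?H0, ?E1}"
      then show "Q.cm n 3 s t" unfolding H_def E_def by (auto intro!: cmk)
    next
      show "?E2 ^ i \<in> Q.alg {?E2}" by (intro Q.alg_pow Q.a_gen) simp
      show "?Y \<in> Q.alg {?H0, ?E1}"
        by (intro Q.a_mult Q.alg_B Q.alg_pow Q.alg_diff Q.alg_of_nat Q.a_gen) simp_all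
    qed
    then show ?thesis unfolding Q.cm_def by (intro eqv_smul Q.eqv_multL Q.eqv_multR)
  qed
  also have "\<dots> = smul c ((Q.B ?H1 i * Q.B ?H0 a) * (Q.B (?H0 - of_nat a) (j - a) * ?E1 ^ a * (?E2 ^ i * ?E2 ^ (j - a))))"
    by (simp add: mult.assoc)
  also have "Q.eqv n 3 \<dots> (smul c ((Q.B ?H0 a * Q.B ?H1 i) * (Q.B (?H0 - of_nat a) (j - a) * ?E1 ^ a * (?E2 ^ i * ?E2 ^ (j - a)))))"
  proof -
    have "Q.cm n 3 (Q.B ?H1 i) (Q.B ?H0 a)"
    proof (rule Q.alg_cm[of "{?H1}" "{?H0}"])
      fix s t assume "s \<in> {?H1}" "t \<in> {?H0}"
      then show "Q.cm n 3 s t" unfolding H_def by (auto intro!: cmk)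
    qed (intro Q.alg_B Q.a_gen, simp)+
    then show ?thesis unfolding Q.cm_def by (intro eqv_smul Q.eqv_multL Q.eqv_multR)
  qed
  also have "\<dots> = smul c (Q.B ?H0 a * (Q.B ?H1 i * Q.B (?H0 - of_nat a) (j - a)) * (?E1 ^ a * ?E2 ^ (i + j - a)))"
  proof -
    have "i + j - a = i + (j - a)" using assms by simp
    then show ?thesis by (simp add: mult.assoc power_add)
  qed
  finally show ?thesis .
qed

lemma R1:
  "Q.eqv n 3 (homT PSH (Tw k i) * homT PDR (Tw k j))
     (\<Sum>a\<le>j. smul ((-1) ^ (i + j)) (Q.B (H 0 k) a * (Q.B (H 1 k) i * Q.B (H 0 k - of_nat a) (j - a)) * (E 1 k ^ a * E 2 k ^ (i + j - a))) :: 'a::field_char_0 fa)"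
proof -
  let ?H0 = "H 0 k :: 'a fa" and ?H1 = "H 1 k :: 'a fa" and ?E1 = "E 1 k :: 'a fa" and ?E2 = "E 2 k :: 'a fa"
  let ?c = "(-1) ^ (i + j) :: 'a"
  have v: "Q.eqv n 3 (Q.DP (?E1 + ?E2) j) (\<Sum>a\<le>j. Q.DP ?E1 a * Q.DP ?E2 (j - a))"
  proof (rule Q.vdmDP[of "{?E1}" "{?E2}"])
    fix s t assume "s \<in> {?E1}" "t \<in> {?E2}"
    then show "Q.cm n 3 s t" unfolding E_def by (auto intro!: cmk)
  qed (rule Q.a_gen, simp)+
  have "homT PSH (Tw k i) * homT PDR (Tw k j) = smul ?c (Q.B ?H1 i * (?E2 ^ i * (Q.B ?H0 j * (?E1 + ?E2) ^ j)))"
    unfolding homT_Tw homs by (simp add: scs power_add mult.commute)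
  also have "\<dots> = smul ?c (Q.B ?H1 i * (?E2 ^ i * (Q.B ?H0 j * smul (fact j) (Q.DP (?E1 + ?E2) j))))"
    by (subst pow_DP[of "?E1 + ?E2" j]) (rule refl)
  also have "Q.eqv n 3 \<dots> (smul ?c (Q.B ?H1 i * (?E2 ^ i * (Q.B ?H0 j * smul (fact j) (\<Sum>a\<le>j. Q.DP ?E1 a * Q.DP ?E2 (j - a))))))"
    by (intro eqv_smul Q.eqv_multL v)
  also have "\<dots> = (\<Sum>a\<le>j. smul ?c (Q.B ?H1 i * (?E2 ^ i * (Q.B ?H0 j * smul (fact j) (Q.DP ?E1 a * Q.DP ?E2 (j - a))))))"
    by (simp only: smul_sum sum_distrib_left)
  also have "Q.eqv n 3 \<dots> (\<Sum>a\<le>j. smul ?c (Q.B ?H0 a * (Q.B ?H1 i * Q.B (?H0 - of_nat a) (j - a)) * (?E1 ^ a * ?E2 ^ (i + j - a))))"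
    by (rule Q.eqv_sum, rule R1a) simp
  finally show ?thesis .
qed

lemma cocycle_single:
  "Q.eqv n 3 (\<Sum>i\<le>r. Tw k i * homT PDL (Tw k (r - i)))
             (\<Sum>i\<le>r. homT PSH (Tw k i) * homT PDR (Tw k (r - i)) :: 'a::field_char_0 fa)"
proof -
  let ?H0 = "H 0 k :: 'a fa" and ?H1 = "H 1 k :: 'a fa" and ?E1 = "E 1 k :: 'a fa" and ?E2 = "E 2 k :: 'a fa"
  let ?c = "(-1) ^ r :: 'a"
  let ?N = "\<lambda>a. ?E1 ^ a * ?E2 ^ (r - a)"
  have lhs: "Q.eqv n 3 (\<Sum>i\<le>r. Tw k i * homT PDL (Tw k (r - i)))
      (\<Sum>i\<le>r. smul ?c (Q.B ?H0 i * Q.B (?H0 + ?H1 - of_nat i) (r - i) * ?N i))"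
  proof (rule Q.eqv_sum)
    fix i assume "i \<in> {..r}"
    then have e: "i + (r - i) = r" by simp
    then show "Q.eqv n 3 (Tw k i * homT PDL (Tw k (r - i))) (smul ?c (Q.B ?H0 i * Q.B (?H0 + ?H1 - of_nat i) (r - i) * ?N i))"
      using L1[of i "r - i"] by (simp only: e)
  qed
  have "Q.eqv n 3 (\<Sum>i\<le>r. homT PSH (Tw k i) * homT PDR (Tw k (r - i)))
      (\<Sum>i\<le>r. \<Sum>a\<le>r-i. smul ?c (Q.B ?H0 a * (Q.B ?H1 i * Q.B (?H0 - of_nat a) (r - a - i)) * ?N a))"
  proof (rule Q.eqv_sum)
    fix i assume "i \<in> {..r}"
    then have e: "i + (r - i) = r" by simp
    have e2: "\<And>a. r - i - a = r - a - i" by simp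
    show "Q.eqv n 3 (homT PSH (Tw k i) * homT PDR (Tw k (r - i)))
       (\<Sum>a\<le>r-i. smul ?c (Q.B ?H0 a * (Q.B ?H1 i * Q.B (?H0 - of_nat a) (r - a - i)) * ?N a))"
      using R1[of i "r - i"] by (simp only: e e2)
  qed
  also have "(\<Sum>i\<le>r. \<Sum>a\<le>r-i. smul ?c (Q.B ?H0 a * (Q.B ?H1 i * Q.B (?H0 - of_nat a) (r - a - i)) * ?N a))
      = (\<Sum>a\<le>r. \<Sum>i\<le>r-a. smul ?c (Q.B ?H0 a * (Q.B ?H1 i * Q.B (?H0 - of_nat a) (r - a - i)) * ?N a))"
    by (rule sum_swap_tri)
  also have "\<dots> = (\<Sum>a\<le>r. smul ?c (Q.B ?H0 a * (\<Sum>i\<le>r-a. Q.B ?H1 i * Q.B (?H0 - of_nat a) (r - a - i)) * ?N a))"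
    by (simp only: smul_sum sum_distrib_left sum_distrib_right)
  also have "Q.eqv n 3 \<dots> (\<Sum>a\<le>r. smul ?c (Q.B ?H0 a * Q.B (?H1 + (?H0 - of_nat a)) (r - a) * ?N a))"
  proof (rule Q.eqv_sum)
    fix a assume "a \<in> {..r}"
    have "Q.eqv n 3 (Q.B (?H1 + (?H0 - of_nat a)) (r - a)) (\<Sum>i\<le>r-a. Q.B ?H1 i * Q.B (?H0 - of_nat a) (r - a - i))"
    proof (rule Q.vdmB[of "{?H1}" "{?H0}"])
      fix s t assume "s \<in> {?H1}" "t \<in> {?H0}"
      then show "Q.cm n 3 s t" unfolding H_def by (auto intro!: cmk)
    next
      show "?H1 \<in> Q.alg {?H1}" by (rule Q.a_gen) simp
      show "?H0 - of_nat a \<in> Q.alg {?H0}" by (intro Q.alg_diff Q.alg_of_nat Q.a_gen) simp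
    qed
    note vs = Q.eqv_sym[OF this]
    show "Q.eqv n 3 (smul ?c (Q.B ?H0 a * (\<Sum>i\<le>r-a. Q.B ?H1 i * Q.B (?H0 - of_nat a) (r - a - i)) * ?N a))
        (smul ?c (Q.B ?H0 a * Q.B (?H1 + (?H0 - of_nat a)) (r - a) * ?N a))"
      by (intro eqv_smul Q.eqv_multL Q.eqv_multR vs)
  qed
  also have "\<dots> = (\<Sum>a\<le>r. smul ?c (Q.B ?H0 a * Q.B (?H0 + ?H1 - of_nat a) (r - a) * ?N a))"
  proof -
    have "\<And>a. ?H1 + (?H0 - of_nat a) = ?H0 + ?H1 - of_nat a" by (simp add: algebra_simps)
    then show ?thesis by (simp only:)
  qed
  finally have rhs: "Q.eqv n 3 (\<Sum>i\<le>r. homT PSH (Tw k i) * homT PDR (Tw k (r - i)))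
      (\<Sum>a\<le>r. smul ?c (Q.B ?H0 a * Q.B (?H0 + ?H1 - of_nat a) (r - a) * ?N a))" .
  show ?thesis by (rule Q.eqv_trans[OF lhs Q.eqv_sym[OF rhs]])
qed

end






definition good :: "nat \<Rightarrow> nat \<Rightarrow> 'a::field fa \<Rightarrow> bool" where
  "good n m x \<longleftrightarrow> (\<forall>w. rep x w \<noteq> 0 \<longrightarrow> (\<forall>g\<in>set w. fst g < m \<and> valid_exp n (snd g)))"

lemma good_add: "good n m x \<Longrightarrow> good n m y \<Longrightarrow> good n m (x + y)"
  unfolding good_def rep_plus_pt by (metis add.right_neutral add.left_neutral)

lemma good_zero: "good n m 0"
  unfolding good_def by (simp add: rep_zero fa_zero_def)

lemma good_sum: "(\<And>a. a \<in> A \<Longrightarrow> good n m (f a)) \<Longrightarrow> good n m (sum f A)"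
proof (induction A rule: infinite_finite_induct)
  case (insert x F) then show ?case by (simp add: good_add)
qed (simp_all add: good_zero)

lemma good_mult: "good n m x \<Longrightarrow> good n m y \<Longrightarrow> good n m (x * y)"
proof -
  assume gx: "good n m x" and gy: "good n m y"
  show ?thesis unfolding good_def
  proof (intro allI impI ballI)
    fix w g assume w: "rep (x * y) w \<noteq> 0" and g: "g \<in> set w"
    have "w \<in> supp (fa_mult (rep x) (rep y))" using w by (simp add: supp_def rep_times)
    then have "w \<in> (\<lambda>(u,v). u @ v) ` (supp (rep x) \<times> supp (rep y))"
      by (rule subsetD[OF supp_mult])
    then obtain u v where uv: "w = u @ v" "rep x u \<noteq> 0" "rep y v \<noteq> 0"
      unfolding supp_def by auto
    have "g \<in> set u \<or> g \<in> set v" using g uv(1) by simp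
    then show "fst g < m \<and> valid_exp n (snd g)"
    proof
      assume "g \<in> set u" then show ?thesis using gx uv(2) unfolding good_def by blast
    next
      assume "g \<in> set v" then show ?thesis using gy uv(3) unfolding good_def by blast
    qed
  qed
qed

lemma good_smul: "good n m x \<Longrightarrow> good n m (smul c x)"
  unfolding good_def smul_def rep_sc_times_pt by auto

lemma good_sc: "good n m (sc c)"
  unfolding good_def by (simp add: rep_sc fa_smult_def fa_one_def)

lemma good_one: "good n m 1"
  using good_sc[of n m 1] by (simp add: sc_one')

lemma good_uminus: "good n m x \<Longrightarrow> good n m (- x)"
  by (subst sc_minus1[of x]) (rule good_mult[OF good_sc])

lemma good_diff: "good n m x \<Longrightarrow> good n m y \<Longrightarrow> good n m (x - y)"
  by (simp only: diff_conv_add_uminus good_add good_uminus)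

lemma good_of_nat: "good n m (of_nat k)"
  by (induction k) (simp_all add: good_zero good_one good_add)

lemma good_pow: "good n m x \<Longrightarrow> good n m (x ^ r)"
  by (induction r) (simp_all add: good_one good_mult)

lemma good_fall: "good n m x \<Longrightarrow> good n m (fall x r)"
  by (induction r) (simp_all add: good_one good_mult good_diff good_of_nat)

lemma good_B: "good n m x \<Longrightarrow> good n m (Q.B x r)"
  unfolding B_smul by (intro good_smul good_fall)

lemma good_genT: "fst g < m \<Longrightarrow> valid_exp n (snd g) \<Longrightarrow> good n m (genT g)"
  unfolding good_def by (simp add: rep_genT fa_gen_def)

lemma fa_elem_good: "good n m x \<Longrightarrow> fa_elem n m (rep x)"
  unfolding fa_elem_def good_def using fin_rep by blast

definition J :: "nat \<Rightarrow> nat \<Rightarrow> 'a::field_char_0 fa fps set" where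
  "J n m = {A. \<forall>r. A $ r \<in> Iset n m}"

interpretation FQ: qring "J n m" for n m
proof
  show "0 \<in> J n m" unfolding J_def mem_Collect_eq fps_zero_nth by (intro allI Q.I0)
next
  fix x y :: "'a::field_char_0 fa fps" assume x: "x \<in> J n m" and y: "y \<in> J n m"
  have xr: "\<And>r. x $ r \<in> Iset n m" using x unfolding J_def by simp
  have yr: "\<And>r. y $ r \<in> Iset n m" using y unfolding J_def by simp
  show "x + y \<in> J n m" unfolding J_def mem_Collect_eq fps_add_nth by (intro allI Q.Iadd xr yr)
next
  fix x y :: "'a::field_char_0 fa fps" assume x: "x \<in> J n m"
  have xr: "\<And>r. x $ r \<in> Iset n m" using x unfolding J_def by simp
  show "y * x \<in> J n m" unfolding J_def fps_mult_nth mem_Collect_eq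
    by (intro allI Q.Isum Q.IL xr)
  show "x * y \<in> J n m" unfolding J_def fps_mult_nth mem_Collect_eq
    by (intro allI Q.Isum Q.IR xr)
qed

lemma FQ_eqv_iff: "FQ.eqv n m A B \<longleftrightarrow> (\<forall>r. Q.eqv n m (A $ r) (B $ r))"
  by (unfold FQ.eqv_def Q.eqv_def, unfold J_def) simp

definition fmap :: "(gen \<Rightarrow> 'a::field fa) \<Rightarrow> 'a fa fps \<Rightarrow> 'a fa fps" where
  "fmap \<Phi> A = Abs_fps (\<lambda>r. homT \<Phi> (A $ r))"

lemma fmap_nth: "fmap \<Phi> A $ r = homT \<Phi> (A $ r)"
  by (simp add: fmap_def)

lemma fmap_mult: "fmap \<Phi> (A * B) = fmap \<Phi> A * fmap \<Phi> B"
  by (rule fps_ext) (simp add: fmap_nth fps_mult_nth homT_sum homT_mult)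

lemma fmap_one: "fmap \<Phi> 1 = 1"
  by (rule fps_ext) (simp add: fmap_nth homT_one homT_zero)






definition TP :: "int \<Rightarrow> 'a::field_char_0 fa fps" where "TP k = Abs_fps (Tw k)"
definition Gw :: "int \<Rightarrow> nat \<Rightarrow> 'a::field_char_0 fa" where
  "Gw k r = smul ((-1) ^ r) (Q.B (- H 0 k) r * E 1 k ^ r)"
definition TG :: "int \<Rightarrow> 'a::field_char_0 fa fps" where "TG k = Abs_fps (Gw k)"

lemma fall0: "fall (0::'r::ring_1) r = (if r = 0 then 1 else 0)"
proof (induction r)
  case (Suc r) then show ?case by (cases r) simp_all
qed simp

lemma B0: "Q.B 0 r = (if r = 0 then 1 else 0)"
  unfolding Q.B_def fall0 by (simp add: sc_one')

lemma smul_zero: "smul c 0 = 0"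
  unfolding smul_def by simp

lemma commute_fps:
  assumes "\<And>i j. Q.cm n m (A $ i) (B $ j)"
  shows "FQ.eqv n m (A * B) (B * A)"
  unfolding FQ_eqv_iff
proof
  fix r
  have "(A * B) $ r = (\<Sum>i=0..r. A $ i * B $ (r - i))" by (rule fps_mult_nth)
  also have "Q.eqv n m \<dots> (\<Sum>i=0..r. B $ (r - i) * A $ i)"
    by (rule Q.eqv_sum) (use assms in \<open>simp add: Q.cm_def\<close>)
  also have "\<dots> = (\<Sum>i=0..r. B $ (r - (r + 0 - i)) * A $ (r + 0 - i))"
    by (rule sum.atLeastAtMost_rev)
  also have "\<dots> = (\<Sum>i=0..r. B $ i * A $ (r - i))"
    by (rule sum.cong) auto
  also have "\<dots> = (B * A) $ r" by (rule fps_mult_nth[symmetric])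
  finally show "Q.eqv n m ((A * B) $ r) ((B * A) $ r)" .
qed

definition GenS :: "int \<Rightarrow> nat \<Rightarrow> 'a::field_char_0 fa set" where
  "GenS k m = {genT (j, \<alpha>) | j \<alpha>. j < m \<and> (\<alpha> = h_exp k \<or> \<alpha> = e_exp k)}"

lemma cm_cross:
  assumes "1 \<le> k" "k \<le> int n" "1 \<le> k'" "k' \<le> int n" "k \<noteq> k'"
    and s: "s \<in> GenS k m" and t: "t \<in> GenS k' m"
  shows "Q.cm n m s t"
proof -
  obtain j \<alpha> where sj: "s = genT (j, \<alpha>)" "j < m" "\<alpha> = h_exp k \<or> \<alpha> = e_exp k" using s unfolding GenS_def by blast
  obtain l \<beta> where tl: "t = genT (l, \<beta>)" "l < m" "\<beta> = h_exp k' \<or> \<beta> = e_exp k'" using t unfolding GenS_def by blast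
  have va: "valid_exp n \<alpha>" using sj(3) valid_h[OF assms(1,2)] valid_e[OF assms(1,2)] by auto
  have vb: "valid_exp n \<beta>" using tl(3) valid_h[OF assms(3,4)] valid_e[OF assms(3,4)] by auto
  have pa: "pm k \<alpha>" using sj(3) pm_h pm_e by auto
  have pb: "pm k' \<beta>" using tl(3) pm_h pm_e by auto
  show ?thesis
  proof (cases "j = l")
    case True
    have "Q.eqv n m (genT (j,\<alpha>) * genT (j,\<beta>)) (genT (j,\<beta>) * genT (j,\<alpha>) + 0)"
      by (rule rel_same[OF sj(2) va vb bracket_zero[OF assms(1,3,5) pa pb]])
    then show ?thesis using sj tl True by (simp add: Q.cm_def)
  next
    case False
    then show ?thesis using sj tl cm_slots[OF sj(2) tl(2) False va vb] by simp
  qed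
qed

lemma alg_smulBpow: "x \<in> Q.alg S \<Longrightarrow> y \<in> Q.alg S \<Longrightarrow> smul c (Q.B x r * y ^ r) \<in> Q.alg S"
  unfolding smul_def by (intro Q.a_mult Q.alg_sc Q.alg_B Q.alg_pow)

lemma genS_in: "j < m \<Longrightarrow> genT (j, h_exp k) \<in> Q.alg (GenS k m)" "j < m \<Longrightarrow> genT (j, e_exp k) \<in> Q.alg (GenS k m)"
  by (rule Q.a_gen, auto simp: GenS_def)+

context
  fixes n :: nat and k :: int
  assumes kb: "1 \<le> k" "k \<le> int n"
begin

lemma TP_nth: "TP k $ r = Tw k r" by (simp add: TP_def)
lemma TG_nth: "TG k $ r = Gw k r" by (simp add: TG_def)

lemma cocycle_fps: "FQ.eqv n 3 (TP k * fmap PDL (TP k)) (fmap PSH (TP k) * fmap PDR (TP k) :: 'a::field_char_0 fa fps)"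
  unfolding FQ_eqv_iff fps_mult_nth fmap_nth TP_nth atLeast0AtMost
  using cocycle_single[OF kb] by blast

lemma alg_coeffs:
  "Tw k r \<in> Q.alg (GenS k 3)" "homT PDL (Tw k r) \<in> Q.alg (GenS k 3)"
  "homT PDR (Tw k r) \<in> Q.alg (GenS k 3)" "homT PSH (Tw k r) \<in> Q.alg (GenS k (3::nat))"
  unfolding homT_Tw homs[OF kb] unfolding Tw_B H_def E_def
  by (intro alg_smulBpow Q.a_add genS_in; simp)+

lemma inv_gen:
  assumes X: "X \<in> Q.alg {H 0 k}" and Y: "Y \<in> Q.alg {H 0 k}" and XY: "X + Y = 0"
  shows "Q.eqv n 2 (\<Sum>i\<le>r. smul ((-1) ^ i) (Q.B X i * E 1 k ^ i) * smul ((-1) ^ (r - i)) (Q.B Y (r - i) * E 1 k ^ (r - i)))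
           (if r = 0 then 1 else (0::'a::field_char_0 fa))"
proof -
  let ?H0 = "H 0 k :: 'a fa" and ?E1 = "E 1 k :: 'a fa"
  have cmHH: "\<And>s t. s \<in> {?H0} \<Longrightarrow> t \<in> {?H0} \<Longrightarrow> Q.cm n 2 s t" by (simp add: Q.cm_def)
  have step: "Q.eqv n 2 (smul ((-1) ^ i) (Q.B X i * ?E1 ^ i) * smul ((-1) ^ (r - i)) (Q.B Y (r - i) * ?E1 ^ (r - i)))
                (smul ((-1) ^ r) (Q.B X i * Q.B Y (r - i) * ?E1 ^ r))" if "i \<in> {..r}" for i
  proof -
    have ir: "i + (r - i) = r" "r - i + i = r" using that by simp_all
    have "Q.cm n 2 (?E1 ^ i) (Q.B Y (r - i))"
    proof (rule Q.alg_cm[of "{?E1}" "{?H0}"])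
      fix s t assume "s \<in> {?E1}" "t \<in> {?H0}"
      then show "Q.cm n 2 s t" unfolding H_def E_def using cm_slots[of 1 2 0 n "e_exp k" "h_exp k"] vh[OF kb] ve[OF kb] by simp
    qed (rule Q.alg_pow, rule Q.a_gen, simp, rule Q.alg_B, rule Y)
    then have c: "Q.eqv n 2 (?E1 ^ i * Q.B Y (r - i)) (Q.B Y (r - i) * ?E1 ^ i)" unfolding Q.cm_def .
    have "smul ((-1) ^ i) (Q.B X i * ?E1 ^ i) * smul ((-1) ^ (r - i)) (Q.B Y (r - i) * ?E1 ^ (r - i))
        = smul ((-1) ^ r) (Q.B X i * (?E1 ^ i * Q.B Y (r - i)) * ?E1 ^ (r - i))"
      by (simp add: scs power_add[symmetric] ir)
    also have "Q.eqv n 2 \<dots> (smul ((-1) ^ r) (Q.B X i * (Q.B Y (r - i) * ?E1 ^ i) * ?E1 ^ (r - i)))"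
      by (intro eqv_smul Q.eqv_multL Q.eqv_multR c)
    also have "\<dots> = smul ((-1) ^ r) (Q.B X i * Q.B Y (r - i) * ?E1 ^ r)"
      by (simp add: mult.assoc power_add[symmetric] ir)
    finally show ?thesis .
  qed
  have "Q.eqv n 2 (\<Sum>i\<le>r. smul ((-1) ^ i) (Q.B X i * ?E1 ^ i) * smul ((-1) ^ (r - i)) (Q.B Y (r - i) * ?E1 ^ (r - i)))
         (\<Sum>i\<le>r. smul ((-1) ^ r) (Q.B X i * Q.B Y (r - i) * ?E1 ^ r))"
    by (rule Q.eqv_sum, rule step)
  also have "\<dots> = smul ((-1) ^ r) ((\<Sum>i\<le>r. Q.B X i * Q.B Y (r - i)) * ?E1 ^ r)"
    by (simp only: smul_sum sum_distrib_right)
  also have "Q.eqv n 2 \<dots> (smul ((-1) ^ r) (Q.B (X + Y) r * ?E1 ^ r))"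
    using Q.eqv_sym[OF Q.vdmB[OF cmHH X Y]] by (intro eqv_smul Q.eqv_multR)
  also have "\<dots> = (if r = 0 then 1 else 0)"
    by (simp add: XY B0 smul_1 smul_zero)
  finally show ?thesis .
qed

lemma inverse_fps: "FQ.eqv n 2 (TP k * TG k) (1::'a::field_char_0 fa fps)" "FQ.eqv n 2 (TG k * TP k) (1::'a::field_char_0 fa fps)"
proof -
  have h: "H 0 k \<in> Q.alg {H 0 k}" by (rule Q.a_gen) simp
  have mh: "- H 0 k \<in> Q.alg {H 0 k}"
  proof -
    have "0 - H 0 k \<in> Q.alg {H 0 k}" by (intro Q.alg_diff Q.a_cent h) simp
    then show ?thesis by simp
  qed
  show "FQ.eqv n 2 (TP k * TG k) (1::'a fa fps)"
    unfolding FQ_eqv_iff fps_mult_nth TP_nth TG_nth atLeast0AtMost fps_one_nth Tw_B Gw_def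
    by (intro allI, rule inv_gen[OF h mh]) simp
  show "FQ.eqv n 2 (TG k * TP k) (1::'a fa fps)"
    unfolding FQ_eqv_iff fps_mult_nth TP_nth TG_nth atLeast0AtMost fps_one_nth Tw_B Gw_def
    by (intro allI, rule inv_gen[OF mh h]) simp
qed

lemma counit_fps: "fmap PEL (TP k) = (1::'a::field_char_0 fa fps)" "fmap PER (TP k) = (1::'a::field_char_0 fa fps)"
proof -
  have e: "homT PEL (E 1 k) = (genT (0, e_exp k) :: 'a fa)"
    by (simp add: E_def homT_genT PEL_def)
  have h: "homT PER (H 0 k) = (H 0 k :: 'a fa)"
    by (simp add: H_def homT_genT PER_def)
  show "fmap PEL (TP k) = (1::'a fa fps)"
    by (rule fps_ext) (simp add: fmap_nth TP_nth homT_Tw homs[OF kb] B0 smul_1 smul_zero)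
  show "fmap PER (TP k) = (1::'a fa fps)"
    by (rule fps_ext) (unfold fmap_nth TP_nth homT_Tw homs[OF kb] h, simp add: smul_1 smul_zero Q.B_def sc_one' power_0_left)
qed

lemma good_Tw: "good n 2 (Tw k r)" "good n 2 (Gw k r)"
proof -
  have g: "good n 2 (H 0 k)" "good n 2 (E 1 k)"
    unfolding H_def E_def by (intro good_genT; simp add: vh[OF kb] ve[OF kb])+
  show "good n 2 (Tw k r)" unfolding Tw_B by (intro good_smul good_mult good_B good_pow g)
  show "good n 2 (Gw k r)" unfolding Gw_def by (intro good_smul good_mult good_B good_pow good_uminus g)
qed

end






lemma rep_of_nat: "rep (of_nat r :: 'a::field_char_0 fa) = fa_smult (of_nat r) fa_one"
  by (simp add: Q.sc_of_nat[symmetric] rep_sc)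

lemma rep_fall: "fa_falling (rep (x::'a::field_char_0 fa)) r = rep (fall x r)"
  by (induction r) (simp_all add: rep_one rep_times rep_minus rep_of_nat)

lemma rep_pow: "fa_pow (rep (x::'a::field_char_0 fa)) r = rep (x ^ r)"
  by (induction r) (simp_all add: rep_one rep_times)

lemma twistF_rep: "twistF k = (\<lambda>r. rep (TP k $ r) :: gen list \<Rightarrow> 'a::field_char_0)"
  by (rule ext) (simp add: twistF_def TP_def Tw_def H_def E_def rep_times rep_sc fa_mult_sc_left rep_fall rep_pow rep_genT[symmetric])

lemma ser_mult_rep: "ser_mult (\<lambda>r. rep (A $ r)) (\<lambda>r. rep (B $ r)) = (\<lambda>r. rep ((A * B) $ r) :: gen list \<Rightarrow> 'a::field_char_0)"
  by (rule ext, rule ext) (simp add: ser_mult_def fps_mult_nth rep_sum rep_times atLeast0AtMost)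

lemma ser_map_rep: "(\<And>g. rep (\<Phi> g) = \<phi> g) \<Longrightarrow> ser_map \<phi> (\<lambda>r. rep (A $ r)) = (\<lambda>r. rep (fmap \<Phi> A $ r) :: gen list \<Rightarrow> 'a::field_char_0)"
  by (rule ext) (simp add: ser_map_def fmap_nth fa_hom_rep)

lemma ser_one_rep: "ser_one = (\<lambda>r. rep ((1 :: 'a::field_char_0 fa fps) $ r))"
  by (rule ext) (simp add: ser_one_def rep_one rep_zero)

lemma ser_eq_rep: "FQ.eqv n m A B \<Longrightarrow> ser_eq n m (\<lambda>r. rep (A $ r)) (\<lambda>r. rep (B $ r) :: gen list \<Rightarrow> 'a::field_char_0)"
  unfolding ser_eq_def fa_eq_def FQ_eqv_iff Q_eqv_iff rep_minus by blast

theorem mainTheorem7: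
  fixes n :: nat and k k' :: int
  assumes "1 \<le> n" and "1 \<le> k" and "k \<le> int n" and "1 \<le> k'" and "k' \<le> int n" and "k \<noteq> k'"
  shows "is_twist n (ser_mult (twistF k) (twistF k') :: nat \<Rightarrow> gen list \<Rightarrow> 'a::field_char_0)"
proof -
  note kb = assms(2,3) and kb' = assms(4,5)
  let ?P = "TP k :: 'a fa fps" and ?R = "TP k' :: 'a fa fps"
  let ?F = "?P * ?R"
  let ?G = "TG k' * TG k :: 'a fa fps"
  have Fe: "ser_mult (twistF k) (twistF k') = (\<lambda>r. rep (?F $ r))"
    by (simp add: twistF_rep ser_mult_rep)
  have goodF: "\<And>r. fa_elem n 2 (rep (?F $ r))"
    unfolding fps_mult_nth TP_nth[OF kb] TP_nth[OF kb']
    by (intro fa_elem_good good_sum good_mult good_Tw[OF kb] good_Tw[OF kb'])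
  have goodG: "\<And>r. fa_elem n 2 (rep (?G $ r))"
    unfolding fps_mult_nth TG_nth[OF kb] TG_nth[OF kb']
    by (intro fa_elem_good good_sum good_mult good_Tw[OF kb] good_Tw[OF kb'])
  have inv1: "FQ.eqv n 2 (?F * ?G) 1"
  proof -
    have "?F * ?G = ?P * (?R * TG k') * TG k" by (simp add: mult.assoc)
    also have "FQ.eqv n 2 \<dots> (?P * 1 * TG k)"
      by (intro FQ.eqv_multL FQ.eqv_multR inverse_fps[OF kb'])
    also have "\<dots> = ?P * TG k" by simp
    also have "FQ.eqv n 2 \<dots> 1" by (rule inverse_fps[OF kb])
    finally show ?thesis .
  qed
  have inv2: "FQ.eqv n 2 (?G * ?F) 1"
  proof -
    have "?G * ?F = TG k' * (TG k * ?P) * ?R" by (simp add: mult.assoc)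
    also have "FQ.eqv n 2 \<dots> (TG k' * 1 * ?R)"
      by (intro FQ.eqv_multL FQ.eqv_multR inverse_fps[OF kb])
    also have "\<dots> = TG k' * ?R" by simp
    also have "FQ.eqv n 2 \<dots> 1" by (rule inverse_fps[OF kb'])
    finally show ?thesis .
  qed
  have cmA: "\<And>i j. Q.cm n 3 (?R $ i) (fmap PDL ?P $ j)"
    unfolding TP_nth[OF kb] TP_nth[OF kb'] fmap_nth
    by (rule Q.alg_cm[of "GenS k' 3" "GenS k 3"])
       (rule cm_cross[OF kb' kb assms(6)[symmetric]], assumption+, rule alg_coeffs[OF kb'], rule alg_coeffs[OF kb])
  have cmB: "\<And>i j. Q.cm n 3 (fmap PDR ?P $ i) (fmap PSH ?R $ j)"
    unfolding TP_nth[OF kb] TP_nth[OF kb'] fmap_nth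
    by (rule Q.alg_cm[of "GenS k 3" "GenS k' 3"])
       (rule cm_cross[OF kb kb' assms(6)], assumption+, rule alg_coeffs[OF kb], rule alg_coeffs[OF kb'])
  have coc: "FQ.eqv n 3 (?F * fmap PDL ?F) (fmap PSH ?F * fmap PDR ?F)"
  proof -
    have "?F * fmap PDL ?F = ?P * (?R * fmap PDL ?P) * fmap PDL ?R"
      by (simp add: fmap_mult mult.assoc)
    also have "FQ.eqv n 3 \<dots> (?P * (fmap PDL ?P * ?R) * fmap PDL ?R)"
      by (intro FQ.eqv_multL FQ.eqv_multR commute_fps cmA)
    also have "\<dots> = (?P * fmap PDL ?P) * (?R * fmap PDL ?R)"
      by (simp add: mult.assoc)
    also have "FQ.eqv n 3 \<dots> ((fmap PSH ?P * fmap PDR ?P) * (fmap PSH ?R * fmap PDR ?R))"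
      by (intro FQ.eqv_mult cocycle_fps[OF kb] cocycle_fps[OF kb'])
    also have "\<dots> = fmap PSH ?P * (fmap PDR ?P * fmap PSH ?R) * fmap PDR ?R"
      by (simp add: mult.assoc)
    also have "FQ.eqv n 3 \<dots> (fmap PSH ?P * (fmap PSH ?R * fmap PDR ?P) * fmap PDR ?R)"
      by (intro FQ.eqv_multL FQ.eqv_multR commute_fps cmB)
    also have "\<dots> = fmap PSH ?F * fmap PDR ?F"
      by (simp add: fmap_mult mult.assoc)
    finally show ?thesis .
  qed
  have el: "fmap PEL ?F = 1" by (simp add: fmap_mult counit_fps[OF kb] counit_fps[OF kb'])
  have er: "fmap PER ?F = 1" by (simp add: fmap_mult counit_fps[OF kb] counit_fps[OF kb'])
  show ?thesis
    unfolding Fe is_twist_def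
  proof (intro conjI)
    show "\<forall>r. fa_elem n 2 (rep (?F $ r))" using goodF by blast
    show "\<exists>G. (\<forall>r. fa_elem n 2 (G r)) \<and> ser_eq n 2 (ser_mult (\<lambda>r. rep (?F $ r)) G) ser_one \<and>
              ser_eq n 2 (ser_mult G (\<lambda>r. rep (?F $ r))) ser_one"
    proof (rule exI[of _ "\<lambda>r. rep (?G $ r)"], intro conjI allI goodG)
      show "ser_eq n 2 (ser_mult (\<lambda>r. rep (?F $ r)) (\<lambda>r. rep (?G $ r))) ser_one"
        unfolding ser_mult_rep ser_one_rep by (rule ser_eq_rep[OF inv1])
      show "ser_eq n 2 (ser_mult (\<lambda>r. rep (?G $ r)) (\<lambda>r. rep (?F $ r))) ser_one"
        unfolding ser_mult_rep ser_one_rep by (rule ser_eq_rep[OF inv2])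
    qed
    show "ser_eq n 3 (ser_mult (\<lambda>r. rep (?F $ r)) (ser_map delta_left (\<lambda>r. rep (?F $ r))))
        (ser_mult (ser_map shift_slot (\<lambda>r. rep (?F $ r))) (ser_map delta_right (\<lambda>r. rep (?F $ r))))"
      by (simp add: ser_map_rep[OF rep_PDL] ser_map_rep[OF rep_PSH] ser_map_rep[OF rep_PDR] ser_mult_rep ser_eq_rep coc)
    show "ser_eq n 1 (ser_map eps_left (\<lambda>r. rep (?F $ r))) ser_one"
      unfolding ser_map_rep[OF rep_PEL] el ser_one_rep by (rule ser_eq_rep[OF FQ.eqv_refl])
    show "ser_eq n 1 (ser_map eps_right (\<lambda>r. rep (?F $ r))) ser_one"
      unfolding ser_map_rep[OF rep_PER] er ser_one_rep by (rule ser_eq_rep[OF FQ.eqv_refl])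
  qed
qed


end
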